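(* Let $\mathfrak a$ be a commutative $n$-ary superalgebra, invariant with respect to an even non-degenerate skew-symmetric form $(\,,)$, which is irreducible but not simple, and let $\lambda\in S^{n+1}\mathfrak a$ be its derived potential. Let $\mathfrak i$ be a maximal non-trivial ideal of $\mathfrak a$, and let $\mathfrak h\subset\mathfrak a$ be an isotropic subspace with $\mathfrak h\cap\mathfrak i^{\perp}=\{0\}$ such that $(\,,)|_{\mathfrak h\oplus\mathfrak i^{\perp}}$ is non-degenerate. Put $\mathfrak w=\mathfrak i^{\perp}\oplus\mathfrak h$ and $\mathfrak g=\mathfrak w^{\perp}$, so that $\mathfrak a=\mathfrak h\oplus\mathfrak i^{\perp}\oplus\mathfrak g$ and $S^{n+1}\mathfrak a=\bigoplus_{i+j+k=n+1}S^i(\mathfrak h)\cdot S^j(\mathfrak i^{\perp})\cdot S^k(\mathfrak g)$; let $\mu\in S^{n+1}(\mathfrak g)$ be the component of $\lambda$ in $S^0(\mathfrak h)\cdot S^0(\mathfrak i^\perp)\cdot S^{n+1}(\mathfrak g)$. Then the $n$-ary superalgebra $(\mathfrak g,\mu)$ is isomorphic to $\mathfrak i/\mathfrak i^{\perp}$; more precisely, for $a_1,\dots,a_n\in\mathfrak g\subset\mathfrak i$ with images $\tilde a_j$ in $\mathfrak i/\mathfrak i^\perp$, one has $\{\tilde a_1,\dots,\tilde a_n\}_{\mathfrak i/\mathfrak i^{\perp}}=\widetilde{\{a_1,\dots,a_n\}_{(\mathfrak g,\mu)}}$.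
   Context: $\mathbb K=\mathbb R$ or $\mathbb C$; spaces are finite-dimensional $\mathbb Z_2$-graded, $\bar a$ denotes parity. The form $(\,,)$ is even (even and odd parts orthogonal) and skew-symmetric in the super sense: $(a,b)=-(-1)^{\bar a\bar b}(b,a)$. An $n$-ary superalgebra is a space with an $n$-linear map $\{\,\}$; commutative means $\{\dots,a_i,a_{i+1},\dots\}=(-1)^{\bar a_i\bar a_{i+1}}\{\dots,a_{i+1},a_i,\dots\}$; invariant means $(a_0,\{a_1,\dots,a_n\})=(-1)^{\bar a_0\bar a_1}(a_1,\{a_0,a_2,\dots,a_n\})$. An ideal is a subspace $\mathfrak i$ with $\{\mathfrak a,\dots,\mathfrak a,\mathfrak i\}\subset\mathfrak i$. Simple: not the trivial one-dimensional algebra and no proper ideals. Irreducible: not a direct sum of two ideals on which the form is non-degenerate. $\mathfrak i^\perp$ denotes the orthogonal complement with respect to $(\,,)$; in the situation of the claim $\mathfrak i^\perp$ is an ideal contained in $\mathfrak i$, $\mathfrak g\subset\mathfrak i$, and $\mathfrak i=\mathfrak i^\perp\oplus\mathfrak g$, so $\mathfrak i/\mathfrak i^\perp$ carries the induced $n$-ary operation. Derived potential: $S^*\mathfrak a$ carries the Poisson bracket determined by $[x,y]=(x,y)$ for $x,y\in\mathfrak a$, $[v,w_1w_2]=[v,w_1]w_2+(-1)^{\bar v\bar w_1}w_1[v,w_2]$, $[v,w]=-(-1)^{\bar v\bar w}[w,v]$. Every commutative invariant $n$-ary superalgebra structure on $\mathfrak a$ has the form $\{a_1,\dots,a_n\}=[a_1,[\dots,[a_n,\lambda]\dots]]$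 for some $\lambda\in S^{n+1}\mathfrak a$, its derived potential; for a non-degenerate subspace $\mathfrak g$ and $\mu\in S^{n+1}\mathfrak g$, $(\mathfrak g,\mu)$ denotes the $n$-ary superalgebra on $\mathfrak g$ defined by the same formula with $\mu$ in place of $\lambda$ (using the restricted form). *)

theory Defs
  imports Main
begin

text \<open>The finite-dimensional super space \<open>a\<close> is \<open>K^N\<close> with a
homogeneous basis \<open>e_0,...,e_{N-1}\<close>; \<open>par i\<close> is the parity of \<open>e_i\<close> (True = odd).\<close>

type_synonym 'k vec = "nat \<Rightarrow> 'k"
type_synonym mon = "nat \<Rightarrow> nat"
type_synonym 'k spoly = "mon \<Rightarrow> 'k"

definition V :: "nat \<Rightarrow> ('k::zero) vec set" where
  "V N = {v. \<forall>i\<ge>N. v i = 0}"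

definition vzero :: "('k::zero) vec" where "vzero = (\<lambda>_. 0)"
definition vadd :: "('k::plus) vec \<Rightarrow> 'k vec \<Rightarrow> 'k vec" where
  "vadd u w = (\<lambda>i. u i + w i)"
definition vsmul :: "'k::times \<Rightarrow> 'k vec \<Rightarrow> 'k vec" where
  "vsmul c v = (\<lambda>i. c * v i)"

definition sgn2 :: "bool \<Rightarrow> 'k::ring_1" where
  "sgn2 b = (if b then -1 else 1)"

definition homog :: "nat \<Rightarrow> (nat \<Rightarrow> bool) \<Rightarrow> bool \<Rightarrow> ('k::zero) vec \<Rightarrow> bool" where
  "homog N par p v \<longleftrightarrow> v \<in> V N \<and> (\<forall>i. v i \<noteq> 0 \<longrightarrow> par i = p)"

definition evpart :: "(nat \<Rightarrow> bool) \<Rightarrow> ('k::zero) vec \<Rightarrow> 'k vec" where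
  "evpart par v = (\<lambda>i. if par i then 0 else v i)"

definition subsp :: "nat \<Rightarrow> ('k::comm_ring_1) vec set \<Rightarrow> bool" where
  "subsp N U \<longleftrightarrow> U \<subseteq> V N \<and> vzero \<in> U \<and> (\<forall>u\<in>U. \<forall>w\<in>U. vadd u w \<in> U)
      \<and> (\<forall>c. \<forall>u\<in>U. vsmul c u \<in> U)"

definition graded :: "nat \<Rightarrow> (nat \<Rightarrow> bool) \<Rightarrow> ('k::comm_ring_1) vec set \<Rightarrow> bool" where
  "graded N par U \<longleftrightarrow> subsp N U \<and> (\<forall>u\<in>U. evpart par u \<in> U)"

definition splus :: "('k::plus) vec set \<Rightarrow> 'k vec set \<Rightarrow> 'k vec set" where
  "splus U W = {vadd u w | u w. u \<in> U \<and> w \<in> W}"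

definition bform :: "nat \<Rightarrow> (nat \<Rightarrow> nat \<Rightarrow> 'k::comm_ring_1) \<Rightarrow> 'k vec \<Rightarrow> 'k vec \<Rightarrow> 'k" where
  "bform N B v w = (\<Sum>i<N. \<Sum>j<N. v i * B i j * w j)"

definition even_form :: "nat \<Rightarrow> (nat \<Rightarrow> bool) \<Rightarrow> (nat \<Rightarrow> nat \<Rightarrow> 'k::comm_ring_1) \<Rightarrow> bool" where
  "even_form N par B \<longleftrightarrow> (\<forall>p q v w. homog N par p v \<and> homog N par q w \<and> p \<noteq> q
      \<longrightarrow> bform N B v w = 0)"

definition superskew :: "nat \<Rightarrow> (nat \<Rightarrow> bool) \<Rightarrow> (nat \<Rightarrow> nat \<Rightarrow> 'k::comm_ring_1) \<Rightarrow> bool" where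
  "superskew N par B \<longleftrightarrow> (\<forall>p q v w. homog N par p v \<and> homog N par q w
      \<longrightarrow> bform N B v w = - (sgn2 (p \<and> q) * bform N B w v))"

definition nondeg_on :: "nat \<Rightarrow> (nat \<Rightarrow> nat \<Rightarrow> 'k::comm_ring_1) \<Rightarrow> 'k vec set \<Rightarrow> bool" where
  "nondeg_on N B U \<longleftrightarrow> (\<forall>u\<in>U. (\<forall>w\<in>U. bform N B u w = 0) \<longrightarrow> u = vzero)"

definition isotropic :: "nat \<Rightarrow> (nat \<Rightarrow> nat \<Rightarrow> 'k::comm_ring_1) \<Rightarrow> 'k vec set \<Rightarrow> bool" where
  "isotropic N B U \<longleftrightarrow> (\<forall>u\<in>U. \<forall>w\<in>U. bform N B u w = 0)"

definition perp :: "nat \<Rightarrow> (nat \<Rightarrow> nat \<Rightarrow> 'k::comm_ring_1) \<Rightarrow> 'k vec set \<Rightarrow> 'k vec set" where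
  "perp N B U = {v \<in> V N. \<forall>u\<in>U. bform N B v u = 0}"

definition multilinear :: "nat \<Rightarrow> nat \<Rightarrow> ('k::comm_ring_1 vec list \<Rightarrow> 'k vec) \<Rightarrow> bool" where
  "multilinear N n op \<longleftrightarrow>
     (\<forall>as. length as = n \<and> set as \<subseteq> V N \<longrightarrow> op as \<in> V N) \<and>
     (\<forall>as k u w c. length as = n \<and> set as \<subseteq> V N \<and> k < n \<and> u \<in> V N \<and> w \<in> V N \<longrightarrow>
        op (as[k := vadd u w]) = vadd (op (as[k := u])) (op (as[k := w])) \<and>
        op (as[k := vsmul c u]) = vsmul c (op (as[k := u])))"

definition commutative :: "nat \<Rightarrow> (nat \<Rightarrow> bool) \<Rightarrow> nat \<Rightarrow> ('k::comm_ring_1 vec list \<Rightarrow> 'k vec) \<Rightarrow> bool" where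
  "commutative N par n op \<longleftrightarrow>
     (\<forall>as k p q. length as = n \<and> set as \<subseteq> V N \<and> Suc k < n \<and>
        homog N par p (as ! k) \<and> homog N par q (as ! Suc k) \<longrightarrow>
        op as = vsmul (sgn2 (p \<and> q)) (op (as[k := as ! Suc k, Suc k := as ! k])))"

definition invariant :: "nat \<Rightarrow> (nat \<Rightarrow> bool) \<Rightarrow> (nat \<Rightarrow> nat \<Rightarrow> 'k::comm_ring_1) \<Rightarrow> nat
      \<Rightarrow> ('k vec list \<Rightarrow> 'k vec) \<Rightarrow> bool" where
  "invariant N par B n op \<longleftrightarrow>
     (\<forall>a0 a1 rest p q. homog N par p a0 \<and> homog N par q a1 \<and> length rest = n - 1 \<and> set rest \<subseteq> V N \<longrightarrow>
        bform N B a0 (op (a1 # rest)) = sgn2 (p \<and> q) * bform N B a1 (op (a0 # rest)))"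

definition ideal :: "nat \<Rightarrow> (nat \<Rightarrow> bool) \<Rightarrow> nat \<Rightarrow> ('k::comm_ring_1 vec list \<Rightarrow> 'k vec) \<Rightarrow> 'k vec set \<Rightarrow> bool" where
  "ideal N par n op I \<longleftrightarrow> graded N par I \<and>
     (\<forall>as. length as = n \<and> set as \<subseteq> V N \<and> last as \<in> I \<longrightarrow> op as \<in> I)"

definition nontrivial_ideal :: "nat \<Rightarrow> (nat \<Rightarrow> bool) \<Rightarrow> nat \<Rightarrow> ('k::comm_ring_1 vec list \<Rightarrow> 'k vec) \<Rightarrow> 'k vec set \<Rightarrow> bool" where
  "nontrivial_ideal N par n op I \<longleftrightarrow> ideal N par n op I \<and> I \<noteq> {vzero} \<and> I \<noteq> V N"

definition maximal_nontrivial_ideal :: "nat \<Rightarrow> (nat \<Rightarrow> bool) \<Rightarrow> nat \<Rightarrow> ('k::comm_ring_1 vec list \<Rightarrow> 'k vec) \<Rightarrow> 'k vec set \<Rightarrow> bool" where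
  "maximal_nontrivial_ideal N par n op I \<longleftrightarrow> nontrivial_ideal N par n op I \<and>
     \<not> (\<exists>J. nontrivial_ideal N par n op J \<and> I \<subset> J)"

definition trivial_one_dim :: "nat \<Rightarrow> nat \<Rightarrow> ('k::comm_ring_1 vec list \<Rightarrow> 'k vec) \<Rightarrow> bool" where
  "trivial_one_dim N n op \<longleftrightarrow> N = 1 \<and> (\<forall>as. length as = n \<and> set as \<subseteq> V N \<longrightarrow> op as = vzero)"

definition simple :: "nat \<Rightarrow> (nat \<Rightarrow> bool) \<Rightarrow> nat \<Rightarrow> ('k::comm_ring_1 vec list \<Rightarrow> 'k vec) \<Rightarrow> bool" where
  "simple N par n op \<longleftrightarrow> \<not> trivial_one_dim N n op \<and> \<not> (\<exists>I. nontrivial_ideal N par n op I)"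

definition irreducible :: "nat \<Rightarrow> (nat \<Rightarrow> bool) \<Rightarrow> (nat \<Rightarrow> nat \<Rightarrow> 'k::comm_ring_1) \<Rightarrow> nat
      \<Rightarrow> ('k vec list \<Rightarrow> 'k vec) \<Rightarrow> bool" where
  "irreducible N par B n op \<longleftrightarrow>
     \<not> (\<exists>I J. ideal N par n op I \<and> ideal N par n op J \<and> I \<noteq> {vzero} \<and> J \<noteq> {vzero} \<and>
           I \<inter> J = {vzero} \<and> splus I J = V N \<and> nondeg_on N B I \<and> nondeg_on N B J)"

text \<open>An element of \<open>S^* a\<close> is given by its coefficients on the ordered monomials
\<open>x_0^{m 0} x_1^{m 1} ... \<close> (odd generators have exponent \<open>\<le> 1\<close>).\<close>

definition unitm :: "nat \<Rightarrow> mon" where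
  "unitm i = (\<lambda>k. if k = i then 1 else 0)"

definition valid_mon :: "nat \<Rightarrow> (nat \<Rightarrow> bool) \<Rightarrow> mon \<Rightarrow> bool" where
  "valid_mon N par m \<longleftrightarrow> (\<forall>i\<ge>N. m i = 0) \<and> (\<forall>i. par i \<longrightarrow> m i \<le> 1)"

definition mdeg :: "nat \<Rightarrow> mon \<Rightarrow> nat" where
  "mdeg N m = (\<Sum>i<N. m i)"

definition Sdeg :: "nat \<Rightarrow> (nat \<Rightarrow> bool) \<Rightarrow> nat \<Rightarrow> ('k::zero) spoly \<Rightarrow> bool" where
  "Sdeg N par d f \<longleftrightarrow> (\<forall>m. f m \<noteq> 0 \<longrightarrow> valid_mon N par m \<and> mdeg N m = d)"

text \<open>Sign arising when reordering the product of two ordered monomials.\<close>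
definition msgn :: "(nat \<Rightarrow> bool) \<Rightarrow> mon \<Rightarrow> mon \<Rightarrow> 'k::ring_1" where
  "msgn par m1 m2 = (if \<exists>i. par i \<and> 0 < m1 i \<and> 0 < m2 i then 0
     else (-1) ^ card {(i,j). par i \<and> par j \<and> j < i \<and> 0 < m1 i \<and> 0 < m2 j})"

definition pmul :: "(nat \<Rightarrow> bool) \<Rightarrow> ('k::comm_ring_1) spoly \<Rightarrow> 'k spoly \<Rightarrow> 'k spoly" where
  "pmul par f g = (\<lambda>m. \<Sum>m1\<in>{m1. \<forall>i. m1 i \<le> m i}.
      msgn par m1 (\<lambda>i. m i - m1 i) * f m1 * g (\<lambda>i. m i - m1 i))"

definition pone :: "('k::comm_ring_1) spoly" where
  "pone = (\<lambda>m. if m = (\<lambda>_. 0) then 1 else 0)"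

definition emb :: "nat \<Rightarrow> ('k::comm_ring_1) vec \<Rightarrow> 'k spoly" where
  "emb N v = (\<lambda>m. \<Sum>i<N. if m = unitm i then v i else 0)"

definition deg1 :: "nat \<Rightarrow> ('k::comm_ring_1) spoly \<Rightarrow> 'k vec" where
  "deg1 N f = (\<lambda>i. if i < N then f (unitm i) else 0)"

definition vprod :: "nat \<Rightarrow> (nat \<Rightarrow> bool) \<Rightarrow> ('k::comm_ring_1) vec list \<Rightarrow> 'k spoly" where
  "vprod N par vs = foldr (\<lambda>v acc. pmul par (emb N v) acc) vs pone"

definition kspan :: "('k::comm_ring_1) spoly set \<Rightarrow> 'k spoly set" where
  "kspan S = {f. \<exists>F c. finite F \<and> F \<subseteq> S \<and> f = (\<lambda>m. \<Sum>x\<in>F. c x * x m)}"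

definition Ssub :: "nat \<Rightarrow> (nat \<Rightarrow> bool) \<Rightarrow> nat \<Rightarrow> ('k::comm_ring_1) vec set \<Rightarrow> 'k spoly set" where
  "Ssub N par d U = kspan {vprod N par vs | vs. length vs = d \<and> set vs \<subseteq> U}"

definition Srest :: "nat \<Rightarrow> (nat \<Rightarrow> bool) \<Rightarrow> nat \<Rightarrow> ('k::comm_ring_1) vec set \<Rightarrow> 'k vec set
      \<Rightarrow> 'k vec set \<Rightarrow> 'k spoly set" where
  "Srest N par d H P G = kspan {vprod N par (hs @ ps @ gs) | hs ps gs.
      set hs \<subseteq> H \<and> set ps \<subseteq> P \<and> set gs \<subseteq> G \<and>
      length hs + length ps + length gs = d \<and> (hs \<noteq> [] \<or> ps \<noteq> [])}"

text \<open>Left superderivative \<open>\<partial>/\<partial>x_j\<close> on ordered monomials.\<close>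
definition pder :: "(nat \<Rightarrow> bool) \<Rightarrow> nat \<Rightarrow> ('k::comm_ring_1) spoly \<Rightarrow> 'k spoly" where
  "pder par j f = (\<lambda>m. (if par j then (-1) ^ (\<Sum>k<j. if par k then m k else 0) else 1)
      * of_nat (m j + 1) * f (m(j := m j + 1)))"

text \<open>Poisson bracket \<open>[v, f]\<close> for \<open>v \<in> a\<close>, \<open>f \<in> S^* a\<close>: the superderivation of
parity \<open>v\<close> determined by \<open>[e_i, e_j] = (e_i, e_j) = B i j\<close> and the Leibniz rule.\<close>
definition pbr :: "nat \<Rightarrow> (nat \<Rightarrow> bool) \<Rightarrow> (nat \<Rightarrow> nat \<Rightarrow> 'k::comm_ring_1) \<Rightarrow> 'k vec \<Rightarrow> 'k spoly \<Rightarrow> 'k spoly" where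
  "pbr N par B v f = (\<lambda>m. \<Sum>i<N. \<Sum>j<N. v i * B i j * pder par j f m)"

definition brk :: "nat \<Rightarrow> (nat \<Rightarrow> bool) \<Rightarrow> (nat \<Rightarrow> nat \<Rightarrow> 'k::comm_ring_1) \<Rightarrow> 'k vec list \<Rightarrow> 'k spoly \<Rightarrow> 'k spoly" where
  "brk N par B vs f = foldr (\<lambda>v acc. pbr N par B v acc) vs f"

definition potop :: "nat \<Rightarrow> (nat \<Rightarrow> bool) \<Rightarrow> (nat \<Rightarrow> nat \<Rightarrow> 'k::comm_ring_1) \<Rightarrow> 'k spoly \<Rightarrow> 'k vec list \<Rightarrow> 'k vec" where
  "potop N par B f as = deg1 N (brk N par B as f)"

definition coset :: "('k::plus) vec set \<Rightarrow> 'k vec \<Rightarrow> 'k vec set" where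
  "coset P v = {vadd v u | u. u \<in> P}"

definition quot :: "('k::plus) vec set \<Rightarrow> 'k vec set \<Rightarrow> 'k vec set set" where
  "quot I P = coset P ` I"

end

theory Submission
  imports Defs "HOL-Library.Function_Algebras" Complex_Main
begin

interpretation fs: vector_space "vsmul :: 'k::field \<Rightarrow> 'k vec \<Rightarrow> 'k vec"
  by unfold_locales (auto simp: vsmul_def fun_eq_iff algebra_simps)

lemma vadd_eq: "vadd u w = u + w" by (simp add: vadd_def fun_eq_iff)
lemma vzero_eq: "vzero = 0" by (simp add: vzero_def fun_eq_iff)

definition odpart :: "(nat \<Rightarrow> bool) \<Rightarrow> ('k::zero) vec \<Rightarrow> 'k vec" where
  "odpart par v = (\<lambda>i. if par i then v i else 0)"

lemma ev_od: "evpart par v + odpart par v = (v::'k::comm_ring_1 vec)"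
  by (simp add: evpart_def odpart_def fun_eq_iff)

lemma V_add: "(u::'k::comm_ring_1 vec) \<in> V N \<Longrightarrow> w \<in> V N \<Longrightarrow> u + w \<in> V N" by (simp add: V_def)
lemma V_smul: "(u::'k::comm_ring_1 vec) \<in> V N \<Longrightarrow> vsmul c u \<in> V N" by (simp add: V_def vsmul_def)
lemma V_ev: "(u::'k::comm_ring_1 vec) \<in> V N \<Longrightarrow> evpart par u \<in> V N" by (auto simp: V_def evpart_def)
lemma V_od: "(u::'k::comm_ring_1 vec) \<in> V N \<Longrightarrow> odpart par u \<in> V N" by (auto simp: V_def odpart_def)
lemma V_zero: "(0::'k::comm_ring_1 vec) \<in> V N" by (simp add: V_def)

lemma homog_ev: "(u::'k::comm_ring_1 vec) \<in> V N \<Longrightarrow> homog N par False (evpart par u)"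
  unfolding homog_def using V_ev[of u N par] by (auto simp: evpart_def)
lemma homog_od: "(u::'k::comm_ring_1 vec) \<in> V N \<Longrightarrow> homog N par True (odpart par u)"
  unfolding homog_def using V_od[of u N par] by (auto simp: odpart_def)

lemma ev_ev[simp]: "evpart par (evpart par u) = evpart par u" by (simp add: evpart_def fun_eq_iff)
lemma od_od[simp]: "odpart par (odpart par u) = odpart par u" by (simp add: odpart_def fun_eq_iff)
lemma ev_od0[simp]: "evpart par (odpart par u) = 0" by (simp add: evpart_def odpart_def fun_eq_iff)
lemma od_ev0[simp]: "odpart par (evpart par u) = 0" by (simp add: evpart_def odpart_def fun_eq_iff)

section \<open>bilinearity\<close>

lemma bform_add1: "bform N B (u + v) w = bform N B u w + bform N B v w"
  by (simp add: bform_def algebra_simps sum.distrib)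
lemma bform_add2: "bform N B w (u + v) = bform N B w u + bform N B w v"
  by (simp add: bform_def algebra_simps sum.distrib)
lemma bform_smul1: "bform N B (vsmul c u) w = c * bform N B u w"
  by (simp add: bform_def vsmul_def sum_distrib_left algebra_simps)
lemma bform_smul2: "bform N B w (vsmul c u) = c * bform N B w u"
  by (simp add: bform_def vsmul_def sum_distrib_left algebra_simps)
lemma bform_zero1[simp]: "bform N B 0 w = 0" by (simp add: bform_def)
lemma bform_zero2[simp]: "bform N B w 0 = 0" by (simp add: bform_def)
lemma bform_neg1: "bform N B (- u) w = - bform N B u w"
  by (simp add: bform_def sum_negf)
lemma bform_neg2: "bform N B w (- u) = - bform N B w u"
  by (simp add: bform_def sum_negf)
lemma bform_diff1: "bform N B (u - v) w = bform N B u w - bform N B v w"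
  using bform_add1[of N B u "-v" w] bform_neg1[of N B v w] by simp
lemma bform_diff2: "bform N B w (u - v) = bform N B w u - bform N B w v"
  using bform_add2[of N B w u "-v"] bform_neg2[of N B w v] by simp

lemma bform_span_eq:
  assumes "\<forall>u\<in>U. bform N B k u = bform N B x u" "v \<in> fs.span U"
  shows "bform N B k v = bform N B x v"
  using assms(2)
proof (induct rule: fs.span_induct_alt)
  case base then show ?case by (simp add: bform_def)
next
  case (step c u y) then show ?case using assms(1) bform_add2[of N B k "vsmul c u" y] bform_add2[of N B x "vsmul c u" y]
    bform_smul2[of N B k c u] bform_smul2[of N B x c u] by (simp add: plus_fun_def)
qed

lemma bform_span0:
  assumes "\<forall>u\<in>U. bform N B k u = 0" "v \<in> fs.span U"
  shows "bform N B k v = 0"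
  using bform_span_eq[of U N B k 0 v] assms by simp

lemma subsp_add: "subsp N X \<Longrightarrow> x \<in> X \<Longrightarrow> y \<in> X \<Longrightarrow> x + y \<in> X"
  by (simp add: subsp_def vadd_eq)
lemma subsp_smul: "subsp N X \<Longrightarrow> x \<in> X \<Longrightarrow> vsmul c x \<in> X"
  by (simp add: subsp_def)
lemma subsp_zero: "subsp N X \<Longrightarrow> 0 \<in> X"
  by (simp add: subsp_def vzero_eq)
lemma vsmul_m1: "vsmul (-1) x = - (x::'k::comm_ring_1 vec)" by (simp add: vsmul_def fun_eq_iff)
lemma subsp_neg: "subsp N X \<Longrightarrow> x \<in> X \<Longrightarrow> - x \<in> X"
  using subsp_smul[of N X x "-1"] vsmul_m1[of x] by simp



section \<open>grading and symmetry\<close>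

context
  fixes N :: nat and par :: "nat \<Rightarrow> bool" and B :: "nat \<Rightarrow> nat \<Rightarrow> 'k::field"
  assumes even: "even_form N par B" and skew: "superskew N par B"
begin

lemma b_ev_od: "x \<in> V N \<Longrightarrow> y \<in> V N \<Longrightarrow> bform N B (evpart par x) (odpart par y) = 0"
proof -
  assume "x \<in> V N" "y \<in> V N"
  then have "homog N par False (evpart par x)" "homog N par True (odpart par y)" by (auto intro: homog_ev homog_od)
  then show ?thesis using even unfolding even_form_def by blast
qed
lemma b_od_ev: "x \<in> V N \<Longrightarrow> y \<in> V N \<Longrightarrow> bform N B (odpart par x) (evpart par y) = 0"
proof -
  assume "x \<in> V N" "y \<in> V N"
  then have "homog N par True (odpart par x)" "homog N par False (evpart par y)" by (auto intro: homog_ev homog_od)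
  then show ?thesis using even unfolding even_form_def by blast
qed

lemma b_split: "x \<in> V N \<Longrightarrow> y \<in> V N \<Longrightarrow>
  bform N B x y = bform N B (evpart par x) (evpart par y) + bform N B (odpart par x) (odpart par y)"
proof -
  assume xy: "x \<in> V N" "y \<in> V N"
  have "bform N B x y = bform N B (evpart par x + odpart par x) (evpart par y + odpart par y)"
    by (simp add: ev_od)
  also have "\<dots> = bform N B (evpart par x) (evpart par y) + bform N B (odpart par x) (odpart par y)"
    using b_ev_od[OF xy] b_od_ev[OF xy] by (simp add: bform_add1 bform_add2)
  finally show ?thesis .
qed

lemma b_skew_ev: "x \<in> V N \<Longrightarrow> y \<in> V N \<Longrightarrow>
  bform N B (evpart par x) (evpart par y) = - bform N B (evpart par y) (evpart par x)"
proof -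
  assume "x \<in> V N" "y \<in> V N"
  then have "homog N par False (evpart par x)" "homog N par False (evpart par y)" by (auto intro: homog_ev)
  then show ?thesis using skew[unfolded superskew_def, rule_format, of False "evpart par x" False "evpart par y"]
    by (simp add: sgn2_def)
qed
lemma b_skew_od: "x \<in> V N \<Longrightarrow> y \<in> V N \<Longrightarrow>
  bform N B (odpart par x) (odpart par y) = bform N B (odpart par y) (odpart par x)"
proof -
  assume "x \<in> V N" "y \<in> V N"
  then have "homog N par True (odpart par x)" "homog N par True (odpart par y)" by (auto intro: homog_od)
  then show ?thesis using skew[unfolded superskew_def, rule_format, of True "odpart par x" True "odpart par y"]
    by (simp add: sgn2_def)
qed

lemma graded_ev: "graded N par X \<Longrightarrow> x \<in> X \<Longrightarrow> evpart par x \<in> X"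
  by (simp add: graded_def)
lemma graded_od: "graded N par X \<Longrightarrow> x \<in> X \<Longrightarrow> odpart par x \<in> X"
proof -
  assume g: "graded N par X" and x: "x \<in> X"
  have s: "subsp N X" using g by (simp add: graded_def)
  have "x + - evpart par x \<in> X" using subsp_add[OF s x subsp_neg[OF s graded_ev[OF g x]]] .
  moreover have "x + - evpart par x = odpart par x" by (simp add: evpart_def odpart_def fun_eq_iff)
  ultimately show ?thesis by simp
qed

lemma graded_V: "graded N par X \<Longrightarrow> X \<subseteq> V N"
  by (simp add: graded_def subsp_def)

lemma b_ev_left: "x \<in> V N \<Longrightarrow> y \<in> V N \<Longrightarrow> bform N B (evpart par x) y = bform N B (evpart par x) (evpart par y)"
  using b_split[of "evpart par x" y] V_ev[of x N par] by simp
lemma b_od_left: "x \<in> V N \<Longrightarrow> y \<in> V N \<Longrightarrow> bform N B (odpart par x) y = bform N B (odpart par x) (odpart par y)"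
  using b_split[of "odpart par x" y] V_od[of x N par] by simp
lemma b_ev_right: "x \<in> V N \<Longrightarrow> y \<in> V N \<Longrightarrow> bform N B x (evpart par y) = bform N B (evpart par x) (evpart par y)"
  using b_split[of x "evpart par y"] V_ev[of y N par] by simp
lemma b_od_right: "x \<in> V N \<Longrightarrow> y \<in> V N \<Longrightarrow> bform N B x (odpart par y) = bform N B (odpart par x) (odpart par y)"
  using b_split[of x "odpart par y"] V_od[of y N par] by simp

lemma sym1:
  assumes g: "graded N par X" and y: "y \<in> V N" and h: "\<forall>x\<in>X. bform N B x y = 0" and x: "x \<in> X"
  shows "bform N B y x = 0"
proof -
  have xV: "x \<in> V N" using graded_V[OF g] x by auto
  have "bform N B (evpart par x) y = 0" using h graded_ev[OF g x] by blast
  then have e: "bform N B (evpart par x) (evpart par y) = 0" using b_ev_left[OF xV y] by simp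
  have "bform N B (odpart par x) y = 0" using h graded_od[OF g x] by blast
  then have o: "bform N B (odpart par x) (odpart par y) = 0" using b_od_left[OF xV y] by simp
  show ?thesis using b_split[OF y xV] b_skew_ev[OF xV y] b_skew_od[OF xV y] e o by simp
qed

lemma sym2:
  assumes g: "graded N par X" and y: "y \<in> V N" and h: "\<forall>x\<in>X. bform N B y x = 0" and x: "x \<in> X"
  shows "bform N B x y = 0"
proof -
  have xV: "x \<in> V N" using graded_V[OF g] x by auto
  have "bform N B y (evpart par x) = 0" using h graded_ev[OF g x] by blast
  then have e: "bform N B (evpart par y) (evpart par x) = 0" using b_ev_right[OF y xV] by simp
  have "bform N B y (odpart par x) = 0" using h graded_od[OF g x] by blast
  then have o: "bform N B (odpart par y) (odpart par x) = 0" using b_od_right[OF y xV] by simp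
  show ?thesis using b_split[OF xV y] b_skew_ev[OF y xV] b_skew_od[OF y xV] e o by simp
qed

lemma perp_subsp: "subsp N (perp N B X)"
proof -
  have "vadd u w \<in> perp N B X" if "u \<in> perp N B X" "w \<in> perp N B X" for u w
    using that V_add[of u N w] bform_add1[of N B u w] by (auto simp: perp_def vadd_eq)
  moreover have "vsmul c u \<in> perp N B X" if "u \<in> perp N B X" for u c
    using that V_smul[of u N c] bform_smul1[of N B c u] by (auto simp: perp_def)
  moreover have "vzero \<in> perp N B X" using V_zero by (auto simp: perp_def vzero_eq)
  ultimately show ?thesis unfolding subsp_def perp_def by auto
qed

lemma perp_graded: assumes g: "graded N par X" shows "graded N par (perp N B X)"
proof -
  have "evpart par v \<in> perp N B X" if v: "v \<in> perp N B X" for v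
  proof -
    have vV: "v \<in> V N" using v by (simp add: perp_def)
    have "bform N B (evpart par v) u = 0" if u: "u \<in> X" for u
    proof -
      have uV: "u \<in> V N" using graded_V[OF g] u by auto
      have "bform N B v (evpart par u) = 0" using v graded_ev[OF g u] by (simp add: perp_def)
      then show ?thesis using b_ev_left[OF vV uV] b_ev_right[OF vV uV] by simp
    qed
    then show ?thesis using V_ev[OF vV] by (simp add: perp_def)
  qed
  then show ?thesis using perp_subsp by (simp add: graded_def)
qed

lemma V_graded: "graded N par (V N)"
  by (auto simp: graded_def subsp_def V_def vzero_def vadd_def vsmul_def evpart_def)

lemma nondeg_right:
  assumes nd: "nondeg_on N B (V N)" and y: "y \<in> V N" and h: "\<forall>x\<in>V N. bform N B x y = 0"
  shows "y = 0"
  using nd y sym1[OF V_graded y h] unfolding nondeg_on_def vzero_eq by blast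

end

lemma subsp_fs: "subsp N X \<Longrightarrow> fs.subspace X"
  unfolding fs.subspace_def subsp_def by (simp add: vadd_eq vzero_eq)

lemma sep:
  fixes B :: "nat \<Rightarrow> nat \<Rightarrow> 'k::field"
  assumes K: "subsp N K" and Y: "fs.subspace Y"
    and sepY: "\<forall>y\<in>Y. (\<forall>k\<in>K. bform N B k y = 0) \<longrightarrow> y = 0" and U: "finite U"
  shows "U \<subseteq> Y \<Longrightarrow> y \<in> Y \<Longrightarrow> y \<notin> fs.span U \<Longrightarrow> \<exists>k\<in>K. (\<forall>u\<in>U. bform N B k u = 0) \<and> bform N B k y = 1"
  using U
proof (induct U arbitrary: y rule: finite_induct)
  case empty
  then have "y \<noteq> 0" by simp
  then obtain k where k: "k \<in> K" "bform N B k y \<noteq> 0" using sepY empty by blast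
  have "vsmul (inverse (bform N B k y)) k \<in> K" using subsp_smul[OF K k(1)] .
  then show ?case using k(2) by (auto simp: bform_smul1 intro!: bexI[of _ "vsmul (inverse (bform N B k y)) k"])
next
  case (insert u0 U0 y)
  have U0Y: "U0 \<subseteq> Y" and u0Y: "u0 \<in> Y" using insert by auto
  show ?case
  proof (cases "u0 \<in> fs.span U0")
    case True
    have "y \<notin> fs.span U0" using insert.prems(3) fs.span_mono[of U0 "insert u0 U0"] by auto
    then obtain k where k: "k \<in> K" "\<forall>u\<in>U0. bform N B k u = 0" "bform N B k y = 1"
      using insert(3)[OF U0Y insert.prems(2)] by blast
    have "bform N B k u0 = 0" using bform_span0[OF k(2) True] .
    then show ?thesis using k by auto
  next
    case False
    obtain x2 where x2: "x2 \<in> K" "\<forall>u\<in>U0. bform N B x2 u = 0" "bform N B x2 u0 = 1"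
      using insert(3)[OF U0Y u0Y False] by blast
    define z where "z = y - vsmul (bform N B x2 y) u0"
    have zY: "z \<in> Y" unfolding z_def
      using fs.subspace_diff[OF Y insert.prems(2) fs.subspace_scale[OF Y u0Y]] by simp
    have "z \<notin> fs.span U0"
    proof
      assume "z \<in> fs.span U0"
      then have "z \<in> fs.span (insert u0 U0)" using fs.span_mono[of U0 "insert u0 U0"] by auto
      moreover have "vsmul (bform N B x2 y) u0 \<in> fs.span (insert u0 U0)"
        by (simp add: fs.span_base fs.span_scale)
      ultimately have "z + vsmul (bform N B x2 y) u0 \<in> fs.span (insert u0 U0)" by (rule fs.span_add)
      then show False using insert.prems(3) by (simp add: z_def)
    qed
    then obtain x3 where x3: "x3 \<in> K" "\<forall>u\<in>U0. bform N B x3 u = 0" "bform N B x3 z = 1"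
      using insert(3)[OF U0Y zY] by blast
    define k where "k = x3 - vsmul (bform N B x3 u0) x2"
    have kK: "k \<in> K" unfolding k_def using subsp_add[OF K x3(1) subsp_neg[OF K subsp_smul[OF K x2(1)]]] by simp
    have "\<forall>u\<in>U0. bform N B k u = 0" using x2 x3 by (simp add: k_def bform_diff1 bform_smul1)
    moreover have "bform N B k u0 = 0" using x2 by (simp add: k_def bform_diff1 bform_smul1)
    moreover have "bform N B k y = 1" using x3(3) x2(3)
      by (simp add: k_def z_def bform_diff1 bform_diff2 bform_smul1 bform_smul2 algebra_simps)
    ultimately show ?thesis using kK by auto
  qed
qed


lemma rep:
  fixes B :: "nat \<Rightarrow> nat \<Rightarrow> 'k::field"
  assumes K: "subsp N K" and Y: "fs.subspace Y"
    and sepY: "\<forall>y\<in>Y. (\<forall>k\<in>K. bform N B k y = 0) \<longrightarrow> y = 0" and F: "finite F"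
  shows "F \<subseteq> Y \<Longrightarrow> \<exists>k\<in>K. \<forall>u\<in>F. bform N B k u = bform N B x u"
  using F
proof (induct F rule: finite_induct)
  case empty
  then show ?case using subsp_zero[OF K] by auto
next
  case (insert f0 F0)
  then obtain k1 where k1: "k1 \<in> K" "\<forall>u\<in>F0. bform N B k1 u = bform N B x u" by auto
  show ?case
  proof (cases "f0 \<in> fs.span F0")
    case True
    then show ?thesis using bform_span_eq[OF k1(2) True] k1 by auto
  next
    case False
    have "\<exists>k\<in>K. (\<forall>u\<in>F0. bform N B k u = 0) \<and> bform N B k f0 = 1"
      by (rule sep[OF K Y sepY insert(1)]) (use insert.prems False in auto)
    then obtain k2 where k2: "k2 \<in> K" "\<forall>u\<in>F0. bform N B k2 u = 0" "bform N B k2 f0 = 1"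
      by blast
    define k where "k = k1 + vsmul (bform N B x f0 - bform N B k1 f0) k2"
    have "k \<in> K" unfolding k_def by (rule subsp_add[OF K k1(1) subsp_smul[OF K k2(1)]])
    moreover have "\<forall>u\<in>insert f0 F0. bform N B k u = bform N B x u"
    proof
      fix u assume u: "u \<in> insert f0 F0"
      have e: "bform N B k u = bform N B k1 u + (bform N B x f0 - bform N B k1 f0) * bform N B k2 u"
        unfolding k_def by (simp only: bform_add1 bform_smul1)
      show "bform N B k u = bform N B x u"
      proof (cases "u = f0")
        case True then show ?thesis using e k2(3) by simp
      next
        case False then have "u \<in> F0" using u by simp
        then show ?thesis using e k1(2) k2(2) by simp
      qed
    qed
    ultimately show ?thesis by blast
  qed
qed

lemma sum_fun_apply: "(sum f A) x = sum (\<lambda>a. f a x) A"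
  by (induct A rule: infinite_finite_induct) auto

definition uv :: "nat \<Rightarrow> 'k::comm_ring_1 vec" where "uv i = (\<lambda>k. if k = i then 1 else 0)"

lemma V_span: "V N \<subseteq> fs.span (uv ` {..<N} :: 'k::field vec set)"
proof
  fix v :: "'k vec" assume v: "v \<in> V N"
  have "v = (\<Sum>i<N. vsmul (v i) (uv i))"
  proof
    fix k
    have "(\<Sum>i<N. vsmul (v i) (uv i)) k = (\<Sum>i<N. if i = k then v i else 0)"
      unfolding sum_fun_apply by (intro sum.cong) (auto simp: vsmul_def uv_def)
    also have "\<dots> = (if k < N then v k else 0)" by (simp add: sum.delta')
    also have "\<dots> = v k" using v by (simp add: V_def)
    finally show "v k = (\<Sum>i<N. vsmul (v i) (uv i)) k" by simp
  qed
  also have "\<dots> \<in> fs.span (uv ` {..<N})"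
    by (intro fs.span_sum fs.span_scale fs.span_base) auto
  finally show "v \<in> fs.span (uv ` {..<N})" .
qed

lemma fspan:
  assumes U: "subsp N (U :: 'k::field vec set)"
  shows "\<exists>F. finite F \<and> F \<subseteq> U \<and> fs.span F = U"
proof -
  obtain Bs where Bs: "Bs \<subseteq> U" "fs.independent Bs" "U \<subseteq> fs.span Bs" "card Bs = fs.dim U"
    by (rule fs.basis_exists[of U])
  have UV: "U \<subseteq> V N" using U by (simp add: subsp_def)
  have "Bs \<subseteq> fs.span (uv ` {..<N})" using Bs(1) UV V_span[of N] by blast
  from fs.independent_span_bound[OF _ Bs(2) this] have "finite Bs" by simp
  moreover have "fs.span Bs = U"
    using fs.span_subspace[OF Bs(1) Bs(3) subsp_fs[OF U]] .
  ultimately show ?thesis using Bs(1) by blast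
qed

definition msub :: "mon \<Rightarrow> nat \<Rightarrow> mon" where "msub m k = (\<lambda>i. m i - unitm k i)"
definition Xi :: "(nat \<Rightarrow> bool) \<Rightarrow> nat \<Rightarrow> ('k::comm_ring_1) spoly \<Rightarrow> 'k spoly" where
  "Xi par k f = (\<lambda>m. if 0 < m k then msgn par (unitm k) (msub m k) * f (msub m k) else 0)"
definition good :: "nat \<Rightarrow> (nat \<Rightarrow> bool) \<Rightarrow> ('k::zero) spoly \<Rightarrow> bool" where
  "good N par f \<longleftrightarrow> (\<forall>m. f m \<noteq> 0 \<longrightarrow> valid_mon N par m)"
definition cnt :: "(nat \<Rightarrow> bool) \<Rightarrow> nat \<Rightarrow> mon \<Rightarrow> nat" where
  "cnt par k n = card {j. j < k \<and> par j \<and> 0 < n j}"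
definition Sg :: "(nat \<Rightarrow> bool) \<Rightarrow> nat \<Rightarrow> mon \<Rightarrow> 'k::comm_ring_1" where
  "Sg par j m = (if par j then (-1) ^ (\<Sum>i<j. if par i then m i else 0) else 1)"

lemma pder_Sg: "pder par j f m = Sg par j m * of_nat (m j + 1) * f (m(j := m j + 1))"
  by (simp add: pder_def Sg_def)

lemma unitm_pos: "(0 < unitm k i) = (i = k)" by (simp add: unitm_def)

lemma msgn_unit: "msgn par (unitm k) n =
  (if par k then (if 0 < n k then 0 else (-1) ^ cnt par k n) else (1::'k::ring_1))"
proof -
  have ex: "(\<exists>i. par i \<and> 0 < unitm k i \<and> 0 < n i) = (par k \<and> 0 < n k)"
    by (auto simp: unitm_pos)
  have st: "{(i,j). par i \<and> par j \<and> j < i \<and> 0 < unitm k i \<and> 0 < n j} =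
    (if par k then (\<lambda>j. (k,j)) ` {j. j < k \<and> par j \<and> 0 < n j} else {})"
    by (auto simp: unitm_pos)
  have c: "card ((\<lambda>j. (k,j)) ` {j. j < k \<and> par j \<and> 0 < n j}) = cnt par k n"
    unfolding cnt_def by (rule card_image) (auto simp: inj_on_def)
  show ?thesis unfolding msgn_def ex st using c by auto
qed

lemma valid_cnt:
  assumes v: "valid_mon N par m"
  shows "(\<Sum>i<j. if par i then m i else 0) = cnt par j m"
proof -
  have "(\<Sum>i<j. if par i then m i else 0) = (\<Sum>i<j. if par i \<and> 0 < m i then 1 else 0)"
  proof (rule sum.cong)
    fix i assume "i \<in> {..<j}"
    show "(if par i then m i else 0) = (if par i \<and> 0 < m i then 1 else 0)"
      using v unfolding valid_mon_def by (cases "par i"; cases "m i") auto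
  qed simp
  also have "\<dots> = sum (\<lambda>x. 1) {i \<in> {..<j}. par i \<and> 0 < m i}"
    by (rule sum.inter_filter[symmetric]) simp
  also have "\<dots> = card {i \<in> {..<j}. par i \<and> 0 < m i}"
    by (rule card_eq_sum[symmetric])
  also have "\<dots> = cnt par j m" unfolding cnt_def
    by (rule arg_cong[where f=card]) auto
  finally show ?thesis .
qed

lemma valid_msub: "valid_mon N par m \<Longrightarrow> valid_mon N par (msub m k)"
  unfolding valid_mon_def msub_def by (auto intro: le_trans[OF diff_le_self])

lemma valid_upd: "valid_mon N par (m(j := v)) \<Longrightarrow> m j \<le> v \<Longrightarrow> valid_mon N par m"
  unfolding valid_mon_def
  by (metis fun_upd_apply le_antisym le_trans nat_le_linear le_zero_eq)

lemma Sg_msgn_one: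
  assumes v: "valid_mon N par n" and p: "par j" and z: "\<not> 0 < n j"
  shows "Sg par j n * msgn par (unitm j) n = (1::'k::comm_ring_1)"
proof -
  have "Sg par j n = ((-1::'k) ^ cnt par j n)" using valid_cnt[OF v] p by (simp add: Sg_def)
  then show ?thesis using p z by (simp add: msgn_unit power_add[symmetric] flip: power_mult_distrib)
qed


lemma msub_upd_same: "msub (m(j := m j + 1)) j = m"
  by (simp add: msub_def unitm_def fun_eq_iff)
lemma msub_upd_same': "msub (m(j := Suc (m j))) j = m"
  by (simp add: msub_def unitm_def fun_eq_iff)
lemma msub_upd_back: "0 < m j \<Longrightarrow> (msub m j)(j := msub m j j + 1) = m"
  by (simp add: msub_def unitm_def fun_eq_iff)
lemma msub_j: "0 < m j \<Longrightarrow> msub m j j + 1 = m j"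
  by (simp add: msub_def unitm_def)
lemma msub_upd_other: "k \<noteq> j \<Longrightarrow> msub (m(j := v)) k = (msub m k)(j := v)"
  by (simp add: msub_def unitm_def fun_eq_iff)
lemma msub_other: "k \<noteq> j \<Longrightarrow> msub m k j = m j"
  by (simp add: msub_def unitm_def)

lemma sum_par_msub:
  assumes "0 < m k"
  shows "(\<Sum>i<j. if par i then m i else 0) =
    (\<Sum>i<j. if par i then msub m k i else 0) + (if k < j \<and> par k then 1 else 0)"
proof -
  have "(\<Sum>i<j. if par i then m i else 0) =
      (\<Sum>i<j. (if par i then msub m k i else 0) + (if i = k \<and> par k then 1 else 0))"
    by (rule sum.cong) (use assms in \<open>auto simp: msub_def unitm_def\<close>)
  also have "\<dots> = (\<Sum>i<j. if par i then msub m k i else 0) + (\<Sum>i<j. if i = k \<and> par k then 1 else 0)"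
    by (rule sum.distrib)
  also have "(\<Sum>i<j. if i = k \<and> par k then (1::nat) else 0) = (if k < j \<and> par k then 1 else 0)"
    by (cases "par k") (auto simp: sum.delta')
  finally show ?thesis .
qed

lemma cnt_upd:
  assumes "j \<noteq> k" "0 < v" "par j \<longrightarrow> n j = 0"
  shows "cnt par k (n(j := v)) = cnt par k n + (if j < k \<and> par j then 1 else 0)"
proof -
  let ?S = "{i. i < k \<and> par i \<and> 0 < n i}"
  have fin: "finite ?S" by (rule finite_subset[of _ "{..<k}"]) auto
  show ?thesis
  proof (cases "j < k \<and> par j")
    case True
    then have "{i. i < k \<and> par i \<and> 0 < (n(j := v)) i} = insert j ?S" using assms by auto
    moreover have "j \<notin> ?S" using assms True by auto
    ultimately show ?thesis using True fin by (simp add: cnt_def)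
  next
    case False
    then have "{i. i < k \<and> par i \<and> 0 < (n(j := v)) i} = ?S" using assms by auto
    then show ?thesis using False by (simp add: cnt_def)
  qed
qed

lemma pderX:
  fixes f :: "'k::comm_ring_1 spoly"
  assumes g: "good N par f"
  shows "pder par j (Xi par k f) m =
    (if k = j then f m else 0) + (if par k \<and> par j then -1 else 1) * Xi par k (pder par j f) m"
proof (cases "k = j")
  case True
  note kj = True
  have L: "pder par j (Xi par k f) m = Sg par j m * of_nat (m j + 1) * (msgn par (unitm j) m * f m)"
    unfolding pder_Sg Xi_def using kj by (simp add: msub_upd_same msub_upd_same')
  have R: "Xi par k (pder par j f) m = (if 0 < m j then msgn par (unitm j) (msub m j) *
      (Sg par j (msub m j) * of_nat (m j) * f m) else 0)"
  proof (cases "0 < m j")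
    case True
    have e2: "msub m j j + 1 = m j" using msub_j[of m j] True by simp
    have e3: "(msub m j)(j := m j) = m" using msub_upd_back[of m j] True e2 by simp
    show ?thesis unfolding kj Xi_def pder_Sg e2 e3 using True by simp
  next
    case False then show ?thesis using kj by (simp add: Xi_def)
  qed
  show ?thesis
  proof (cases "par j")
    case False
    then show ?thesis using L R kj by (simp add: Sg_def msgn_unit algebra_simps)
  next
    case pj: True
    show ?thesis
    proof (cases "f m = 0")
      case True then show ?thesis using L R kj by simp
    next
      case False
      then have v: "valid_mon N par m" using g by (simp add: good_def)
      then have le: "m j \<le> 1" using pj by (simp add: valid_mon_def)
      show ?thesis
      proof (cases "m j = 0")
        case True
        have "Sg par j m * msgn par (unitm j) m = (1::'k)" using Sg_msgn_one[OF v pj] True by simp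
        then show ?thesis using L R kj pj True by (simp add: algebra_simps)
      next
        case False
        then have mj: "m j = 1" using le by simp
        have vs: "valid_mon N par (msub m j)" using valid_msub[OF v] .
        have z: "\<not> 0 < msub m j j" using mj by (simp add: msub_def unitm_def)
        have "Sg par j (msub m j) * msgn par (unitm j) (msub m j) = (1::'k)" using Sg_msgn_one[OF vs pj z] .
        moreover have "msgn par (unitm j) m = (0::'k)" using pj mj by (simp add: msgn_unit)
        ultimately show ?thesis using L R kj pj mj by (simp add: algebra_simps)
      qed
    qed
  qed
next
  case False
  note kj = False
  let ?n = "msub m k"
  let ?v = "m j + 1"
  have L: "pder par j (Xi par k f) m = Sg par j m * of_nat (m j + 1) *
      (if 0 < m k then msgn par (unitm k) (?n(j := ?v)) * f (?n(j := ?v)) else 0)"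
    unfolding pder_Sg Xi_def using kj by (simp add: msub_upd_other)
  have R: "Xi par k (pder par j f) m = (if 0 < m k then msgn par (unitm k) ?n *
      (Sg par j ?n * of_nat (m j + 1) * f (?n(j := ?v))) else 0)"
    unfolding Xi_def pder_Sg using kj by (simp add: msub_other)
  show ?thesis
  proof (cases "0 < m k \<and> f (?n(j := ?v)) \<noteq> 0")
    case False
    then show ?thesis using L R kj by auto
  next
    case True
    then have mk: "0 < m k" and fnz: "f (?n(j := ?v)) \<noteq> 0" by auto
    have vv: "valid_mon N par (?n(j := ?v))" using fnz g by (simp add: good_def)
    have nj: "par j \<longrightarrow> ?n j = 0" using vv kj by (auto simp: valid_mon_def msub_other dest: spec[of _ j])
    have nk: "(?n(j := ?v)) k = ?n k" using kj by simp
    have key: "Sg par j m * msgn par (unitm k) (?n(j := ?v)) =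
        (if par k \<and> par j then -1 else 1) * (msgn par (unitm k) ?n * (Sg par j ?n :: 'k))"
    proof -
      have sm: "(\<Sum>i<j. if par i then m i else 0) =
          (\<Sum>i<j. if par i then ?n i else 0) + (if k < j \<and> par k then 1 else 0)"
        using sum_par_msub[where m=m and k=k and j=j and par=par] mk by simp
      have cu: "cnt par k (?n(j := ?v)) = cnt par k ?n + (if j < k \<and> par j then 1 else 0)"
        using cnt_upd[of j k ?v par ?n] kj nj by auto
      show ?thesis
      proof (cases "par k")
        case False then show ?thesis by (simp add: msgn_unit Sg_def sm)
      next
        case pk: True
        show ?thesis
        proof (cases "0 < ?n k")
          case True then show ?thesis using pk nk by (simp add: msgn_unit)
        next
          case False
          then have nk0: "\<not> 0 < (?n(j := ?v)) k" using nk by simp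
          show ?thesis
          proof (cases "par j")
            case pj: True
            have "k < j \<or> j < k" using kj by arith
            then show ?thesis using pk pj False nk0 cu sm
              by (auto simp: msgn_unit Sg_def power_add)
          next
            case False then show ?thesis using pk nk0 cu sm \<open>\<not> 0 < ?n k\<close>
              by (simp add: msgn_unit Sg_def)
          qed
        qed
      qed
    qed
    have "pder par j (Xi par k f) m = (Sg par j m * msgn par (unitm k) (?n(j := ?v))) * of_nat (m j + 1) * f (?n(j := ?v))"
      using L mk by (simp add: algebra_simps)
    also have "\<dots> = (if par k \<and> par j then -1 else 1) * Xi par k (pder par j f) m"
      unfolding key R using mk by (simp add: algebra_simps)
    finally show ?thesis using kj by simp
  qed
qed


lemma sum_nz: "sum f A \<noteq> 0 \<Longrightarrow> \<exists>a\<in>A. f a \<noteq> 0"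
  by (meson sum.neutral)

lemma fin_S:
  fixes m :: mon and N :: nat
  assumes "\<forall>l\<ge>N. m l = 0"
  shows "finite {m1. \<forall>i. m1 i \<le> (m i :: nat)}"
proof -
  let ?M = "\<Sum>l<N. m l"
  have "{m1. \<forall>i. m1 i \<le> m i} \<subseteq> {f. \<forall>x. (x \<in> {..<N} \<longrightarrow> f x \<in> {0..?M}) \<and> (x \<notin> {..<N} \<longrightarrow> f x = 0)}"
  proof (clarsimp)
    fix m1 x assume h: "\<forall>i. m1 i \<le> m i"
    show "(x < N \<longrightarrow> m1 x \<le> ?M) \<and> (\<not> x < N \<longrightarrow> m1 x = 0)"
    proof (intro conjI impI)
      assume "x < N"
      then have "m x \<le> ?M" by (intro member_le_sum) (auto simp: finite_lessThan)
      then show "m1 x \<le> ?M" using h le_trans by blast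
    next
      assume "\<not> x < N" then show "m1 x = 0" using h assms by (metis le_zero_eq not_less)
    qed
  qed
  moreover have "finite {f. \<forall>x. (x \<in> {..<N} \<longrightarrow> f x \<in> {0..?M}) \<and> (x \<notin> {..<N} \<longrightarrow> f x = (0::nat))}"
    by (rule finite_set_of_finite_funs) auto
  ultimately show ?thesis by (rule finite_subset)
qed

lemma XvE:
  fixes f :: "'k::comm_ring_1 spoly"
  assumes g: "good N par f"
  shows "pmul par (emb N w) f = (\<lambda>m. \<Sum>i<N. w i * Xi par i f m)"
proof
  fix m :: mon
  let ?S = "{m1. \<forall>i. m1 i \<le> m i}"
  show "pmul par (emb N w) f m = (\<Sum>i<N. w i * Xi par i f m)"
  proof (cases "finite ?S")
    case True
    have "pmul par (emb N w) f m = (\<Sum>m1\<in>?S. \<Sum>i<N. if m1 = unitm i then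
        msgn par (unitm i) (msub m i) * w i * f (msub m i) else 0)"
      unfolding pmul_def emb_def
    proof (rule sum.cong[OF refl])
      fix m1
      show "msgn par m1 (\<lambda>i. m i - m1 i) * (\<Sum>i<N. if m1 = unitm i then w i else 0) * f (\<lambda>i. m i - m1 i) =
        (\<Sum>i<N. if m1 = unitm i then msgn par (unitm i) (msub m i) * w i * f (msub m i) else 0)"
        unfolding sum_distrib_left sum_distrib_right
        by (rule sum.cong[OF refl]) (auto simp: msub_def)
    qed
    also have "\<dots> = (\<Sum>i<N. \<Sum>m1\<in>?S. if m1 = unitm i then
        msgn par (unitm i) (msub m i) * w i * f (msub m i) else 0)"
      by (rule sum.swap)
    also have "\<dots> = (\<Sum>i<N. if unitm i \<in> ?S then msgn par (unitm i) (msub m i) * w i * f (msub m i) else 0)"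
      using True by (simp add: sum.delta')
    also have "\<dots> = (\<Sum>i<N. w i * Xi par i f m)"
    proof (rule sum.cong[OF refl])
      fix i
      have "(unitm i \<in> ?S) = (0 < m i)"
        by (auto simp: unitm_def)
      then show "(if unitm i \<in> ?S then msgn par (unitm i) (msub m i) * w i * f (msub m i) else 0) = w i * Xi par i f m"
        by (simp add: Xi_def algebra_simps)
    qed
    finally show ?thesis .
  next
    case False
    have "Xi par i f m = 0" if i: "i < N" for i
    proof (rule ccontr)
      assume "Xi par i f m \<noteq> 0"
      then have "f (msub m i) \<noteq> 0" by (auto simp: Xi_def split: if_splits)
      then have "valid_mon N par (msub m i)" using g by (simp add: good_def)
      then have "\<forall>l\<ge>N. m l = 0" using i by (auto simp: valid_mon_def msub_def unitm_def)
      then show False using False fin_S by blast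
    qed
    then show ?thesis using False by (simp add: pmul_def)
  qed
qed

lemma good_Xi:
  assumes g: "good N par f" and k: "k < N"
  shows "good N par (Xi par k f)"
  unfolding good_def
proof (intro allI impI)
  fix m assume nz: "Xi par k f m \<noteq> 0"
  then have mk: "0 < m k" and ms: "msgn par (unitm k) (msub m k) \<noteq> (0::'a)" and fz: "f (msub m k) \<noteq> 0"
    by (auto simp: Xi_def split: if_splits)
  have v: "valid_mon N par (msub m k)" using g fz by (simp add: good_def)
  show "valid_mon N par m" unfolding valid_mon_def
  proof (intro conjI allI impI)
    fix i assume "N \<le> i"
    then show "m i = 0" using v k by (auto simp: valid_mon_def msub_def unitm_def dest: spec[of _ i])
  next
    fix i assume pi: "par i"
    show "m i \<le> 1"
    proof (cases "i = k")
      case True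
      then have "\<not> 0 < msub m k k" using ms pi by (auto simp: msgn_unit split: if_splits)
      then show ?thesis using True by (simp add: msub_def unitm_def)
    next
      case False then show ?thesis using v pi by (auto simp: valid_mon_def msub_def unitm_def dest: spec[of _ i])
    qed
  qed
qed

lemma good_lin:
  fixes F :: "'a \<Rightarrow> 'k::comm_ring_1 spoly"
  assumes "\<forall>a\<in>A. good N par (F a)"
  shows "good N par (\<lambda>m. \<Sum>a\<in>A. c a * F a m)"
  unfolding good_def
proof (intro allI impI)
  fix m assume "(\<Sum>a\<in>A. c a * F a m) \<noteq> 0"
  then obtain a where a: "a \<in> A" "c a * F a m \<noteq> 0" using sum_nz by blast
  then have "F a m \<noteq> 0" by (metis mult_zero_right)
  then show "valid_mon N par m" using assms a by (auto simp: good_def)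
qed

lemma good_pder: "good N par f \<Longrightarrow> good N par (pder par j f)"
  unfolding good_def
proof (intro allI impI)
  fix m assume g: "\<forall>m. f m \<noteq> 0 \<longrightarrow> valid_mon N par m" and nz: "pder par j f m \<noteq> 0"
  then have "f (m(j := m j + 1)) \<noteq> 0" unfolding pder_def by (metis mult_zero_right)
  then have "valid_mon N par (m(j := m j + 1))" using g by blast
  then show "valid_mon N par m" by (rule valid_upd) simp
qed

lemma good_pbr: "good N par f \<Longrightarrow> good N par (pbr N par B g f)"
  unfolding good_def pbr_def
proof (intro allI impI)
  fix m assume g: "\<forall>m. f m \<noteq> 0 \<longrightarrow> valid_mon N par m"
    and nz: "(\<Sum>i<N. \<Sum>j<N. g i * B i j * pder par j f m) \<noteq> 0"
  then obtain i where "(\<Sum>j<N. g i * B i j * pder par j f m) \<noteq> 0" using sum_nz by blast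
  then obtain j where "g i * B i j * pder par j f m \<noteq> 0" using sum_nz by blast
  then have "pder par j f m \<noteq> 0" by auto
  then show "valid_mon N par m" using good_pder[of N par f j] g by (auto simp: good_def)
qed

lemma good_Xv: "good N par f \<Longrightarrow> good N par (pmul par (emb N w) f)"
  unfolding XvE by (rule good_lin) (auto intro: good_Xi)

lemma good_pone: "good N par (pone :: 'k::comm_ring_1 spoly)"
  by (auto simp: good_def pone_def valid_mon_def)

lemma good_vprod: "good N par (vprod N par vs :: 'k::comm_ring_1 spoly)"
  by (induct vs) (auto simp: vprod_def good_pone intro: good_Xv)

definition cB :: "nat \<Rightarrow> (nat \<Rightarrow> nat \<Rightarrow> 'k::comm_ring_1) \<Rightarrow> 'k vec \<Rightarrow> nat \<Rightarrow> 'k" where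
  "cB N B g j = (\<Sum>i<N. g i * B i j)"

lemma pbr_expand: "pbr N par B g h = (\<lambda>m. \<Sum>j<N. cB N B g j * pder par j h m)"
  unfolding pbr_def cB_def
  by (rule ext, subst sum.swap) (simp add: sum_distrib_right)

lemma bform_cB: "bform N B g w = (\<Sum>j<N. cB N B g j * w j)"
  unfolding bform_def cB_def
  by (subst sum.swap) (simp add: sum_distrib_right)

lemma pder_lin: "pder par j (\<lambda>m. \<Sum>a\<in>A. c a * F a m) m = (\<Sum>a\<in>A. c a * pder par j (F a) m)"
  unfolding pder_def sum_distrib_left by (rule sum.cong) (simp_all add: mult_ac)

lemma Xi_lin: "Xi par k (\<lambda>m. \<Sum>a\<in>A. c a * F a m) m = (\<Sum>a\<in>A. c a * Xi par k (F a) m)"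
  unfolding Xi_def sum_distrib_left by (simp add: mult_ac)


definition tw :: "(nat \<Rightarrow> bool) \<Rightarrow> 'k::comm_ring_1 vec \<Rightarrow> 'k vec" where
  "tw par g = (\<lambda>i. if par i then - g i else g i)"

lemma cB_tw:
  assumes Bev: "\<forall>i<N. \<forall>j<N. par i \<noteq> par j \<longrightarrow> B i j = 0" and j: "j < N"
  shows "cB N B (tw par g) j = (if par j then - cB N B g j else cB N B g j)"
proof -
  have "cB N B (tw par g) j = (\<Sum>i<N. if par j then - (g i * B i j) else g i * B i j)"
    unfolding cB_def tw_def by (rule sum.cong) (use Bev j in auto)
  then show ?thesis by (simp add: cB_def sum_negf)
qed

lemma leib:
  fixes f :: "'k::comm_ring_1 spoly"
  assumes g: "good N par f" and Bev: "\<forall>i<N. \<forall>j<N. par i \<noteq> par j \<longrightarrow> B i j = 0"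
  shows "pbr N par B g (pmul par (emb N w) f) = (\<lambda>m. bform N B g w * f m
     + pmul par (emb N (evpart par w)) (pbr N par B g f) m
     + pmul par (emb N (odpart par w)) (pbr N par B (tw par g) f) m)"
proof
  fix m
  let ?c = "cB N B g"
  let ?P = "\<lambda>k j. Xi par k (pder par j f) m"
  let ?s = "\<lambda>k j. if par k \<and> par j then -1 else (1::'k)"
  have "pbr N par B g (pmul par (emb N w) f) m = (\<Sum>j<N. ?c j * (\<Sum>k<N. w k * pder par j (Xi par k f) m))"
    unfolding pbr_expand XvE[OF g] pder_lin ..
  also have "\<dots> = (\<Sum>j<N. ?c j * (\<Sum>k<N. w k * ((if k = j then f m else 0) + ?s k j * ?P k j)))"
    unfolding pderX[OF g] ..
  also have "\<dots> = (\<Sum>j<N. ?c j * w j * f m + (\<Sum>k<N. ?c j * w k * ?s k j * ?P k j))"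
  proof (rule sum.cong[OF refl])
    fix j assume j: "j \<in> {..<N}"
    have "(\<Sum>k<N. w k * ((if k = j then f m else 0) + ?s k j * ?P k j)) =
        (\<Sum>k<N. (if k = j then w k * f m else 0)) + (\<Sum>k<N. w k * ?s k j * ?P k j)"
      unfolding sum.distrib[symmetric] by (rule sum.cong) (auto simp: distrib_left mult.assoc)
    also have "(\<Sum>k<N. (if k = j then w k * f m else 0)) = w j * f m" using j by (simp add: sum.delta')
    finally show "?c j * (\<Sum>k<N. w k * ((if k = j then f m else 0) + ?s k j * ?P k j)) =
        ?c j * w j * f m + (\<Sum>k<N. ?c j * w k * ?s k j * ?P k j)"
      by (simp add: algebra_simps sum_distrib_left)
  qed
  also have "\<dots> = (\<Sum>j<N. ?c j * w j * f m) + (\<Sum>j<N. \<Sum>k<N. ?c j * w k * ?s k j * ?P k j)"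
    by (rule sum.distrib)
  also have "(\<Sum>j<N. ?c j * w j * f m) = (\<Sum>j<N. ?c j * w j) * f m"
    by (rule sum_distrib_right[symmetric])
  also have "(\<Sum>j<N. \<Sum>k<N. ?c j * w k * ?s k j * ?P k j) = (\<Sum>k<N. \<Sum>j<N. ?c j * w k * ?s k j * ?P k j)"
    by (rule sum.swap)
  finally have L: "pbr N par B g (pmul par (emb N w) f) m =
      (\<Sum>j<N. ?c j * w j) * f m + (\<Sum>k<N. \<Sum>j<N. ?c j * w k * ?s k j * ?P k j)" .
  have T2: "pmul par (emb N (evpart par w)) (pbr N par B g f) m =
      (\<Sum>k<N. \<Sum>j<N. evpart par w k * ?c j * ?P k j)"
    by (subst XvE[OF good_pbr[OF g]]) (simp only: pbr_expand Xi_lin sum_distrib_left mult.assoc)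
  have T3: "pmul par (emb N (odpart par w)) (pbr N par B (tw par g) f) m =
      (\<Sum>k<N. \<Sum>j<N. odpart par w k * cB N B (tw par g) j * ?P k j)"
    by (subst XvE[OF good_pbr[OF g]]) (simp only: pbr_expand Xi_lin sum_distrib_left mult.assoc)
  have "(\<Sum>k<N. \<Sum>j<N. evpart par w k * ?c j * ?P k j) + (\<Sum>k<N. \<Sum>j<N. odpart par w k * cB N B (tw par g) j * ?P k j)
      = (\<Sum>k<N. \<Sum>j<N. ?c j * w k * ?s k j * ?P k j)"
    unfolding sum.distrib[symmetric]
  proof (intro sum.cong[OF refl])
    fix k j assume j: "j \<in> {..<N}"
    show "evpart par w k * ?c j * ?P k j + odpart par w k * cB N B (tw par g) j * ?P k j = ?c j * w k * ?s k j * ?P k j"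
      using cB_tw[OF Bev, of j g] j by (auto simp: evpart_def odpart_def algebra_simps)
  qed
  note E = this
  show "pbr N par B g (pmul par (emb N w) f) m = bform N B g w * f m
     + pmul par (emb N (evpart par w)) (pbr N par B g f) m
     + pmul par (emb N (odpart par w)) (pbr N par B (tw par g) f) m"
    unfolding L T2 T3 bform_cB E[symmetric] by (simp only: add.assoc)
qed

lemma kspan_zero: "(\<lambda>m. 0) \<in> kspan S"
  unfolding kspan_def by (rule CollectI, rule exI[of _ "{}"]) auto

lemma kspan_base: "x \<in> S \<Longrightarrow> x \<in> kspan S"
  unfolding kspan_def by (rule CollectI, rule exI[of _ "{x}"], rule exI[of _ "\<lambda>_. 1"]) auto

lemma kspan_add:
  assumes "f \<in> kspan S" "g \<in> kspan S"
  shows "(\<lambda>m. f m + g m) \<in> kspan S"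
proof -
  obtain F1 c1 where 1: "finite F1" "F1 \<subseteq> S" "f = (\<lambda>m. \<Sum>x\<in>F1. c1 x * x m)"
    using assms(1) unfolding kspan_def by blast
  obtain F2 c2 where 2: "finite F2" "F2 \<subseteq> S" "g = (\<lambda>m. \<Sum>x\<in>F2. c2 x * x m)"
    using assms(2) unfolding kspan_def by blast
  let ?c = "\<lambda>x. (if x \<in> F1 then c1 x else 0) + (if x \<in> F2 then c2 x else 0)"
  have "(\<lambda>m. f m + g m) = (\<lambda>m. \<Sum>x\<in>F1 \<union> F2. ?c x * x m)"
  proof
    fix m
    have "(\<Sum>x\<in>F1 \<union> F2. ?c x * x m) = (\<Sum>x\<in>F1 \<union> F2. (if x \<in> F1 then c1 x * x m else 0))
        + (\<Sum>x\<in>F1 \<union> F2. (if x \<in> F2 then c2 x * x m else 0))"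
      unfolding sum.distrib[symmetric] by (rule sum.cong) (auto simp: distrib_right)
    also have "(\<Sum>x\<in>F1 \<union> F2. (if x \<in> F1 then c1 x * x m else 0)) = (\<Sum>x\<in>F1. c1 x * x m)"
      using 1 2 by (simp add: sum.inter_restrict[symmetric] Int_absorb1)
    also have "(\<Sum>x\<in>F1 \<union> F2. (if x \<in> F2 then c2 x * x m else 0)) = (\<Sum>x\<in>F2. c2 x * x m)"
      using 1 2 by (simp add: sum.inter_restrict[symmetric] Int_absorb1)
    finally show "f m + g m = (\<Sum>x\<in>F1 \<union> F2. ?c x * x m)" using 1 2 by simp
  qed
  note eq = this
  show ?thesis unfolding kspan_def mem_Collect_eq
    by (intro exI[of _ "F1 \<union> F2"] exI[of _ ?c] conjI) (use 1 2 eq in simp_all)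
qed

lemma kspan_smul:
  assumes "f \<in> kspan S"
  shows "(\<lambda>m. a * f m) \<in> kspan S"
proof -
  obtain F1 c1 where 1: "finite F1" "F1 \<subseteq> S" "f = (\<lambda>m. \<Sum>x\<in>F1. c1 x * x m)"
    using assms(1) unfolding kspan_def by blast
  have "(\<lambda>m. a * f m) = (\<lambda>m. \<Sum>x\<in>F1. (a * c1 x) * x m)"
    using 1 by (simp add: sum_distrib_left mult.assoc)
  note eq = this
  show ?thesis unfolding kspan_def mem_Collect_eq
    by (intro exI[of _ "F1"] exI[of _ "\<lambda>x. a * c1 x"] conjI) (use 1 eq in simp_all)
qed

lemma kspan_lin:
  assumes "finite A" "\<forall>a\<in>A. F a \<in> kspan S"
  shows "(\<lambda>m. \<Sum>a\<in>A. c a * F a m) \<in> kspan S"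
  using assms
proof (induct A rule: finite_induct)
  case empty then show ?case using kspan_zero by simp
next
  case (insert a A)
  have Fa: "F a \<in> kspan S" using insert.prems by simp
  have IH: "(\<lambda>m. \<Sum>a\<in>A. c a * F a m) \<in> kspan S" using insert.hyps(3) insert.prems by simp
  have "(\<lambda>m. c a * F a m + (\<Sum>a\<in>A. c a * F a m)) \<in> kspan S"
    using kspan_add[OF kspan_smul[OF Fa, of "c a"] IH] by simp
  moreover have "(\<lambda>m. \<Sum>a\<in>insert a A. c a * F a m) = (\<lambda>m. c a * F a m + (\<Sum>a\<in>A. c a * F a m))"
    using insert.hyps(1,2) by simp
  ultimately show ?case by simp
qed

lemma kspan_mono: "S \<subseteq> T \<Longrightarrow> kspan S \<subseteq> kspan T"
  unfolding kspan_def by blast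

lemma kspan_map:
  assumes lin: "\<And>F c. finite F \<Longrightarrow> \<phi> (\<lambda>m. \<Sum>x\<in>F. c x * x m) = (\<lambda>m. \<Sum>x\<in>F. c x * \<phi> x m)"
    and base: "\<And>x. x \<in> S \<Longrightarrow> \<phi> x \<in> kspan T"
    and f: "f \<in> kspan S"
  shows "\<phi> f \<in> kspan T"
proof -
  obtain F c where 1: "finite F" "F \<subseteq> S" "f = (\<lambda>m. \<Sum>x\<in>F. c x * x m)"
    using f unfolding kspan_def by blast
  show ?thesis unfolding 1(3) lin[OF 1(1)] by (rule kspan_lin) (use 1 base in auto)
qed

lemma swap_lemma: fixes a :: "'j \<Rightarrow> 'k::comm_ring_1" shows "(\<Sum>j\<in>J. a j * (\<Sum>x\<in>F. c x * P x j)) = (\<Sum>x\<in>F. c x * (\<Sum>j\<in>J. a j * P x j))"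
proof -
  have "(\<Sum>j\<in>J. a j * (\<Sum>x\<in>F. c x * P x j)) = (\<Sum>j\<in>J. \<Sum>x\<in>F. c x * (a j * P x j))"
    by (rule sum.cong[OF refl]) (simp add: sum_distrib_left mult.left_commute)
  also have "\<dots> = (\<Sum>x\<in>F. \<Sum>j\<in>J. c x * (a j * P x j))" by (rule sum.swap)
  also have "\<dots> = (\<Sum>x\<in>F. c x * (\<Sum>j\<in>J. a j * P x j))" by (simp only: sum_distrib_left)
  finally show ?thesis .
qed

lemma pbr_lin: "pbr N par B g (\<lambda>m. \<Sum>x\<in>F. c x * x m) = (\<lambda>m. \<Sum>x\<in>F. c x * pbr N par B g x m)"
  unfolding pbr_expand pder_lin by (rule ext) (rule swap_lemma)

lemma pmul_lin: "pmul par h (\<lambda>m. \<Sum>x\<in>F. c x * x m) = (\<lambda>m. \<Sum>x\<in>F. c x * pmul par h x m)"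
proof
  fix m
  show "pmul par h (\<lambda>m. \<Sum>x\<in>F. c x * x m) m = (\<Sum>x\<in>F. c x * pmul par h x m)"
    unfolding pmul_def using swap_lemma[where a="\<lambda>m1. msgn par m1 (\<lambda>i. m i - m1 i) * h m1" and J="{m1. \<forall>i. m1 i \<le> m i}" and c=c and F=F
      and P="\<lambda>x m1. x (\<lambda>i. m i - m1 i)"] by (simp add: mult.assoc)
qed

lemma pbr_add: "pbr N par B g (\<lambda>m. f1 m + f2 m) = (\<lambda>m. pbr N par B g f1 m + pbr N par B g f2 m)"
  unfolding pbr_def pder_def by (rule ext) (simp add: algebra_simps sum.distrib)

lemma brk_add: "brk N par B as (\<lambda>m. f1 m + f2 m) = (\<lambda>m. brk N par B as f1 m + brk N par B as f2 m)"
  by (induct as) (simp_all add: brk_def pbr_add)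

lemma deg1_add: "deg1 N (\<lambda>m. f1 m + f2 m) = deg1 N f1 + deg1 N f2"
  by (simp add: deg1_def fun_eq_iff)

lemma deg1_lin: "deg1 N (\<lambda>m. \<Sum>x\<in>F. c x * x m) = (\<lambda>i. \<Sum>x\<in>F. c x * deg1 N x i)"
  by (simp add: deg1_def fun_eq_iff)

lemma pone_upd: "pone (m(j := m j + 1)) = 0"
proof -
  have "m(j := m j + 1) \<noteq> (\<lambda>_. 0)" by (metis add_is_0 fun_upd_same one_neq_zero)
  then show ?thesis by (simp add: pone_def)
qed

lemma pbr_pone: "pbr N par B g pone = (\<lambda>m. 0)"
  unfolding pbr_def pder_def pone_upd by simp

lemma pmul_zero: "pmul par h (\<lambda>m. 0) = (\<lambda>m. 0)"
  by (simp add: pmul_def fun_eq_iff)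

lemma vprod_cons: "vprod N par (w # ws) = pmul par (emb N w) (vprod N par ws)"
  by (simp add: vprod_def)

lemma Xv_Ssub:
  assumes u: "u \<in> A" and f: "f \<in> Ssub N par d A"
  shows "pmul par (emb N u) f \<in> Ssub N par (Suc d) A"
  using f unfolding Ssub_def
proof (rule kspan_map[of "pmul par (emb N u)", rotated 2])
  fix x assume "x \<in> {vprod N par vs |vs. length vs = d \<and> set vs \<subseteq> A}"
  then obtain vs where "x = vprod N par vs" "length vs = d" "set vs \<subseteq> A" by blast
  then have "pmul par (emb N u) x = vprod N par (u # vs)" "length (u # vs) = Suc d" "set (u # vs) \<subseteq> A"
    using u by (auto simp: vprod_cons)
  then show "pmul par (emb N u) x \<in> kspan {vprod N par vs |vs. length vs = Suc d \<and> set vs \<subseteq> A}"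
    by (intro kspan_base) blast
qed (rule pmul_lin)

definition Rset :: "nat \<Rightarrow> (nat \<Rightarrow> bool) \<Rightarrow> nat \<Rightarrow> ('k::comm_ring_1) vec set \<Rightarrow> 'k vec set \<Rightarrow> 'k spoly set" where
  "Rset N par d A Z = kspan {vprod N par vs | vs. length vs = d \<and> set vs \<subseteq> A \<and> (\<exists>z\<in>Z. z \<in> set vs)}"

lemma kspan_add3: "a \<in> kspan S \<Longrightarrow> b \<in> kspan S \<Longrightarrow> c \<in> kspan S \<Longrightarrow> (\<lambda>m. a m + b m + c m) \<in> kspan S"
  using kspan_add[of a S b] kspan_add[of "\<lambda>m. a m + b m" S c] by simp

lemma pbr_vprod_cons:
  fixes B :: "nat \<Rightarrow> nat \<Rightarrow> 'k::comm_ring_1"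
  assumes Bev: "\<forall>i<N. \<forall>j<N. par i \<noteq> par j \<longrightarrow> B i j = 0"
  shows "pbr N par B g (vprod N par (w # ws)) = (\<lambda>m. bform N B g w * vprod N par ws m
     + pmul par (emb N (evpart par w)) (pbr N par B g (vprod N par ws)) m
     + pmul par (emb N (odpart par w)) (pbr N par B (tw par g) (vprod N par ws)) m)"
  unfolding vprod_cons by (rule leib[OF good_vprod Bev])

lemma Xv_R1:
  assumes u: "u \<in> A" "u \<in> Z" and f: "f \<in> Ssub N par d A"
  shows "pmul par (emb N u) f \<in> Rset N par (Suc d) A Z"
  using f unfolding Ssub_def Rset_def
proof (rule kspan_map[of "pmul par (emb N u)", rotated 2])
  fix x assume "x \<in> {vprod N par vs |vs. length vs = d \<and> set vs \<subseteq> A}"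
  then obtain vs where "x = vprod N par vs" "length vs = d" "set vs \<subseteq> A" by blast
  then have "pmul par (emb N u) x = vprod N par (u # vs)" "length (u # vs) = Suc d" "set (u # vs) \<subseteq> A"
    "\<exists>z\<in>Z. z \<in> set (u # vs)"
    using u by (auto simp: vprod_cons)
  then show "pmul par (emb N u) x \<in> kspan {vprod N par vs |vs. length vs = Suc d \<and> set vs \<subseteq> A \<and> (\<exists>z\<in>Z. z \<in> set vs)}"
    by (intro kspan_base) blast
qed (rule pmul_lin)

lemma Xv_R2:
  assumes u: "u \<in> A" and f: "f \<in> Rset N par d A Z"
  shows "pmul par (emb N u) f \<in> Rset N par (Suc d) A Z"
  using f unfolding Rset_def
proof (rule kspan_map[of "pmul par (emb N u)", rotated 2])
  fix x assume "x \<in> {vprod N par vs |vs. length vs = d \<and> set vs \<subseteq> A \<and> (\<exists>z\<in>Z. z \<in> set vs)}"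
  then obtain vs where "x = vprod N par vs" "length vs = d" "set vs \<subseteq> A" "\<exists>z\<in>Z. z \<in> set vs" by blast
  then have "pmul par (emb N u) x = vprod N par (u # vs)" "length (u # vs) = Suc d" "set (u # vs) \<subseteq> A"
    "\<exists>z\<in>Z. z \<in> set (u # vs)"
    using u by (auto simp: vprod_cons)
  then show "pmul par (emb N u) x \<in> kspan {vprod N par vs |vs. length vs = Suc d \<and> set vs \<subseteq> A \<and> (\<exists>z\<in>Z. z \<in> set vs)}"
    by (intro kspan_base) blast
qed (rule pmul_lin)

lemma Q_pbr:
  fixes B :: "nat \<Rightarrow> nat \<Rightarrow> 'k::comm_ring_1"
  assumes Bev: "\<forall>i<N. \<forall>j<N. par i \<noteq> par j \<longrightarrow> B i j = 0"
    and cl: "\<forall>a\<in>A. evpart par a \<in> A \<and> odpart par a \<in> A"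
  shows "\<forall>g f. f \<in> Ssub N par (Suc d) A \<longrightarrow> pbr N par B g f \<in> Ssub N par d A"
proof (induct d)
  case 0
  show ?case
  proof (intro allI impI)
    fix g f assume f: "f \<in> Ssub N par (Suc 0) A"
    show "pbr N par B g f \<in> Ssub N par 0 A"
      using f unfolding Ssub_def
    proof (rule kspan_map[of "pbr N par B g", rotated 2])
      fix x assume "x \<in> {vprod N par vs |vs. length vs = Suc 0 \<and> set vs \<subseteq> A}"
      then obtain w where x: "x = vprod N par [w]" by (auto simp: length_Suc_conv)
      have "pone \<in> kspan {vprod N par vs |vs. length vs = 0 \<and> set vs \<subseteq> A}"
        by (intro kspan_base) (auto simp: vprod_def)
      then have "(\<lambda>m. bform N B g w * pone m) \<in> kspan {vprod N par vs |vs. length vs = 0 \<and> set vs \<subseteq> A}"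
        by (rule kspan_smul)
      moreover have "pbr N par B g x = (\<lambda>m. bform N B g w * pone m)"
        unfolding x pbr_vprod_cons[OF Bev] by (simp add: vprod_def pbr_pone pmul_zero)
      ultimately show "pbr N par B g x \<in> kspan {vprod N par vs |vs. length vs = 0 \<and> set vs \<subseteq> A}" by simp
    qed (rule pbr_lin)
  qed
next
  case (Suc d)
  show ?case
  proof (intro allI impI)
    fix g f assume f: "f \<in> Ssub N par (Suc (Suc d)) A"
    show "pbr N par B g f \<in> Ssub N par (Suc d) A"
      using f unfolding Ssub_def
    proof (rule kspan_map[of "pbr N par B g", rotated 2])
      fix x assume "x \<in> {vprod N par vs |vs. length vs = Suc (Suc d) \<and> set vs \<subseteq> A}"
      then obtain w ws where x: "x = vprod N par (w # ws)" and ws: "length ws = Suc d" "set ws \<subseteq> A" and w: "w \<in> A"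
        by (auto simp: length_Suc_conv)
      have vws: "vprod N par ws \<in> Ssub N par (Suc d) A"
        unfolding Ssub_def by (intro kspan_base) (use ws in blast)
      have t1: "(\<lambda>m. bform N B g w * vprod N par ws m) \<in> Ssub N par (Suc d) A"
        using kspan_smul vws unfolding Ssub_def by blast
      have t2: "pmul par (emb N (evpart par w)) (pbr N par B g (vprod N par ws)) \<in> Ssub N par (Suc d) A"
        by (rule Xv_Ssub) (use cl w Suc vws in auto)
      have t3: "pmul par (emb N (odpart par w)) (pbr N par B (tw par g) (vprod N par ws)) \<in> Ssub N par (Suc d) A"
        by (rule Xv_Ssub) (use cl w Suc vws in auto)
      show "pbr N par B g x \<in> kspan {vprod N par vs |vs. length vs = Suc d \<and> set vs \<subseteq> A}"
        unfolding x pbr_vprod_cons[OF Bev] using kspan_add3[OF t1[unfolded Ssub_def] t2[unfolded Ssub_def] t3[unfolded Ssub_def]] .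
    qed (rule pbr_lin)
  qed
qed


lemma R_pbr:
  fixes B :: "nat \<Rightarrow> nat \<Rightarrow> 'k::comm_ring_1"
  assumes Bev: "\<forall>i<N. \<forall>j<N. par i \<noteq> par j \<longrightarrow> B i j = 0"
    and cl: "\<forall>a\<in>A. evpart par a \<in> A \<and> odpart par a \<in> A"
    and clZ: "\<forall>a\<in>Z. evpart par a \<in> Z \<and> odpart par a \<in> Z"
    and ZA: "Z \<subseteq> A"
    and G0: "\<forall>g\<in>G0. tw par g \<in> G0"
    and orth: "\<forall>g\<in>G0. \<forall>z\<in>Z. bform N B g z = 0"
  shows "\<forall>g\<in>G0. \<forall>f. f \<in> Rset N par (Suc d) A Z \<longrightarrow> pbr N par B g f \<in> Rset N par d A Z"
proof (induct d)
  case 0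
  show ?case
  proof (intro ballI allI impI)
    fix g f assume g: "g \<in> G0" and f: "f \<in> Rset N par (Suc 0) A Z"
    show "pbr N par B g f \<in> Rset N par 0 A Z"
      using f unfolding Rset_def
    proof (rule kspan_map[of "pbr N par B g", rotated 2])
      fix x assume "x \<in> {vprod N par vs |vs. length vs = Suc 0 \<and> set vs \<subseteq> A \<and> (\<exists>z\<in>Z. z \<in> set vs)}"
      then obtain w where x: "x = vprod N par [w]" and w: "w \<in> Z" by (auto simp: length_Suc_conv)
      have "pbr N par B g x = (\<lambda>m. 0)"
        unfolding x pbr_vprod_cons[OF Bev] using orth g w by (simp add: vprod_def pbr_pone pmul_zero)
      then show "pbr N par B g x \<in> kspan {vprod N par vs |vs. length vs = 0 \<and> set vs \<subseteq> A \<and> (\<exists>z\<in>Z. z \<in> set vs)}"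
        using kspan_zero by simp
    qed (rule pbr_lin)
  qed
next
  case (Suc d)
  show ?case
  proof (intro ballI allI impI)
    fix g f assume g: "g \<in> G0" and f: "f \<in> Rset N par (Suc (Suc d)) A Z"
    show "pbr N par B g f \<in> Rset N par (Suc d) A Z"
      using f unfolding Rset_def
    proof (rule kspan_map[of "pbr N par B g", rotated 2])
      fix x assume "x \<in> {vprod N par vs |vs. length vs = Suc (Suc d) \<and> set vs \<subseteq> A \<and> (\<exists>z\<in>Z. z \<in> set vs)}"
      then obtain vs where vs: "x = vprod N par vs" "length vs = Suc (Suc d)" "set vs \<subseteq> A" "\<exists>z\<in>Z. z \<in> set vs"
        by blast
      then obtain w ws where vs2: "vs = w # ws" by (cases vs) auto
      have x: "x = vprod N par (w # ws)" and ws: "length ws = Suc d" "set ws \<subseteq> A" and w: "w \<in> A"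
        and mz: "\<exists>z\<in>Z. z \<in> set (w # ws)" using vs vs2 by auto
      have vws: "vprod N par ws \<in> Ssub N par (Suc d) A"
        unfolding Ssub_def by (intro kspan_base) (use ws in blast)
      have tg: "tw par g \<in> G0" using G0 g by blast
      have "(\<lambda>m. bform N B g w * vprod N par ws m + pmul par (emb N (evpart par w)) (pbr N par B g (vprod N par ws)) m
          + pmul par (emb N (odpart par w)) (pbr N par B (tw par g) (vprod N par ws)) m) \<in> Rset N par (Suc d) A Z"
      proof (cases "w \<in> Z")
        case True
        have t1: "(\<lambda>m. bform N B g w * vprod N par ws m) \<in> Rset N par (Suc d) A Z"
          using orth g True kspan_zero unfolding Rset_def by simp
        have Q: "\<forall>g f. f \<in> Ssub N par (Suc d) A \<longrightarrow> pbr N par B g f \<in> Ssub N par d A" by (rule Q_pbr[OF Bev cl])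
        have t2: "pmul par (emb N (evpart par w)) (pbr N par B g (vprod N par ws)) \<in> Rset N par (Suc d) A Z"
          by (rule Xv_R1) (use cl clZ w True Q vws in auto)
        have t3: "pmul par (emb N (odpart par w)) (pbr N par B (tw par g) (vprod N par ws)) \<in> Rset N par (Suc d) A Z"
          by (rule Xv_R1) (use cl clZ w True Q vws in auto)
        show ?thesis using kspan_add3[OF t1[unfolded Rset_def] t2[unfolded Rset_def] t3[unfolded Rset_def]] unfolding Rset_def .
      next
        case False
        then have mz': "\<exists>z\<in>Z. z \<in> set ws" using mz by auto
        have vws': "vprod N par ws \<in> Rset N par (Suc d) A Z"
          unfolding Rset_def by (intro kspan_base) (use ws mz' in blast)
        have t1: "(\<lambda>m. bform N B g w * vprod N par ws m) \<in> Rset N par (Suc d) A Z"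
          using kspan_smul vws' unfolding Rset_def by blast
        have t2: "pmul par (emb N (evpart par w)) (pbr N par B g (vprod N par ws)) \<in> Rset N par (Suc d) A Z"
          by (rule Xv_R2) (use cl w Suc g vws' in auto)
        have t3: "pmul par (emb N (odpart par w)) (pbr N par B (tw par g) (vprod N par ws)) \<in> Rset N par (Suc d) A Z"
          by (rule Xv_R2) (use cl w Suc tg vws' in auto)
        show ?thesis using kspan_add3[OF t1[unfolded Rset_def] t2[unfolded Rset_def] t3[unfolded Rset_def]] unfolding Rset_def .
      qed
      then show "pbr N par B g x \<in> kspan {vprod N par vs |vs. length vs = Suc d \<and> set vs \<subseteq> A \<and> (\<exists>z\<in>Z. z \<in> set vs)}"
        unfolding x pbr_vprod_cons[OF Bev] Rset_def .
    qed (rule pbr_lin)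
  qed
qed

lemma brk_cons: "brk N par B (a # as) f = pbr N par B a (brk N par B as f)"
  by (simp add: brk_def)

lemma brk_Q:
  fixes B :: "nat \<Rightarrow> nat \<Rightarrow> 'k::comm_ring_1"
  assumes Bev: "\<forall>i<N. \<forall>j<N. par i \<noteq> par j \<longrightarrow> B i j = 0"
    and cl: "\<forall>a\<in>A. evpart par a \<in> A \<and> odpart par a \<in> A"
  shows "f \<in> Ssub N par (d + length as) A \<Longrightarrow> brk N par B as f \<in> Ssub N par d A"
proof (induct as arbitrary: d)
  case Nil then show ?case by (simp add: brk_def)
next
  case (Cons a as)
  have "brk N par B as f \<in> Ssub N par (Suc d) A" using Cons by simp
  then show ?case unfolding brk_cons using Q_pbr[OF Bev cl] by blast
qed

lemma brk_R:
  fixes B :: "nat \<Rightarrow> nat \<Rightarrow> 'k::comm_ring_1"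
  assumes Bev: "\<forall>i<N. \<forall>j<N. par i \<noteq> par j \<longrightarrow> B i j = 0"
    and cl: "\<forall>a\<in>A. evpart par a \<in> A \<and> odpart par a \<in> A"
    and clZ: "\<forall>a\<in>Z. evpart par a \<in> Z \<and> odpart par a \<in> Z"
    and ZA: "Z \<subseteq> A"
    and G0: "\<forall>g\<in>G0. tw par g \<in> G0"
    and orth: "\<forall>g\<in>G0. \<forall>z\<in>Z. bform N B g z = 0"
  shows "set as \<subseteq> G0 \<Longrightarrow> f \<in> Rset N par (d + length as) A Z \<Longrightarrow> brk N par B as f \<in> Rset N par d A Z"
proof (induct as arbitrary: d)
  case Nil then show ?case by (simp add: brk_def)
next
  case (Cons a as)
  have "brk N par B as f \<in> Rset N par (Suc d) A Z" using Cons by simp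
  then show ?case unfolding brk_cons using R_pbr[OF Bev cl clZ ZA G0 orth] Cons.prems by auto
qed

lemma subsp_lin:
  fixes v :: "'a \<Rightarrow> 'k::comm_ring_1 vec"
  assumes X: "subsp N X" and F: "finite F" and v: "\<forall>x\<in>F. v x \<in> X"
  shows "(\<lambda>i. \<Sum>x\<in>F. c x * v x i) \<in> X"
  using F v
proof (induct F rule: finite_induct)
  case empty then show ?case using X by (simp add: subsp_def vzero_def)
next
  case (insert a F)
  have "vadd (vsmul (c a) (v a)) (\<lambda>i. \<Sum>x\<in>F. c x * v x i) \<in> X"
    using X insert by (simp add: subsp_def)
  then show ?case using insert by (simp add: vadd_def vsmul_def)
qed

lemma deg1_vprod1:
  assumes w: "(w :: 'k::comm_ring_1 vec) \<in> V N"
  shows "deg1 N (vprod N par [w]) = w"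
proof
  fix j
  have X: "Xi par i pone (unitm j) = (if i = j then 1 else (0::'k))" for i
  proof (cases "i = j")
    case True
    have "msub (unitm j) j = (\<lambda>_. 0)" by (simp add: msub_def unitm_def fun_eq_iff)
    moreover have "msgn par (unitm j) (\<lambda>_. 0) = (1::'k)" by (simp add: msgn_def)
    moreover have "unitm j j = 1" by (simp add: unitm_def)
    ultimately show ?thesis using True by (simp add: Xi_def pone_def)
  next
    case False then show ?thesis by (simp add: Xi_def unitm_def)
  qed
  have "vprod N par [w] = (\<lambda>m. \<Sum>i<N. w i * Xi par i pone m)"
    by (simp add: vprod_def XvE[OF good_pone])
  then show "deg1 N (vprod N par [w]) j = w j"
    using w by (simp add: deg1_def X V_def sum.delta' if_distrib cong: if_cong)
qed

lemma deg1_Ssub1: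
  assumes X: "subsp N X" and AX: "A \<subseteq> X" and f: "f \<in> Ssub N par (Suc 0) A"
  shows "deg1 N f \<in> X"
proof -
  obtain F c where 1: "finite F" "F \<subseteq> {vprod N par vs |vs. length vs = Suc 0 \<and> set vs \<subseteq> A}" "f = (\<lambda>m. \<Sum>x\<in>F. c x * x m)"
    using f unfolding Ssub_def kspan_def by blast
  have "\<forall>x\<in>F. deg1 N x \<in> X"
  proof
    fix x assume "x \<in> F"
    then obtain w where "x = vprod N par [w]" "w \<in> A" using 1(2) by (auto simp: length_Suc_conv)
    moreover have "w \<in> V N" using X AX \<open>w \<in> A\<close> by (auto simp: subsp_def)
    ultimately show "deg1 N x \<in> X" using deg1_vprod1[of w N par] AX by auto
  qed
  then show ?thesis unfolding 1(3) deg1_lin by (rule subsp_lin[OF X 1(1)])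
qed

lemma deg1_R1:
  assumes X: "subsp N X" and ZX: "Z \<subseteq> X" and f: "f \<in> Rset N par (Suc 0) A Z"
  shows "deg1 N f \<in> X"
proof -
  obtain F c where 1: "finite F" "F \<subseteq> {vprod N par vs |vs. length vs = Suc 0 \<and> set vs \<subseteq> A \<and> (\<exists>z\<in>Z. z \<in> set vs)}"
     "f = (\<lambda>m. \<Sum>x\<in>F. c x * x m)"
    using f unfolding Rset_def kspan_def by blast
  have "\<forall>x\<in>F. deg1 N x \<in> X"
  proof
    fix x assume "x \<in> F"
    then obtain w where "x = vprod N par [w]" "w \<in> Z" using 1(2) by (auto simp: length_Suc_conv)
    moreover have "w \<in> V N" using X ZX \<open>w \<in> Z\<close> by (auto simp: subsp_def)
    ultimately show "deg1 N x \<in> X" using deg1_vprod1[of w N par] ZX by auto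
  qed
  then show ?thesis unfolding 1(3) deg1_lin by (rule subsp_lin[OF X 1(1)])
qed

lemma bform_uv:
  fixes B :: "nat \<Rightarrow> nat \<Rightarrow> 'k::comm_ring_1"
  assumes "i < N" "j < N" shows "bform N B (uv i) (uv j) = B i j"
proof -
  have pw: "uv i a * B a b * uv j b = (if a = i then (if b = j then B a b else 0) else 0)" for a b
    by (simp add: uv_def)
  have inner: "(\<Sum>b<N. if a = i then (if b = j then B a b else 0) else 0) = (if a = i then B a j else 0)" for a
    using assms by (cases "a = i") (simp_all add: sum.delta)
  show ?thesis unfolding bform_def pw inner using assms by (simp add: sum.delta)
qed

lemma uv_V: "i < N \<Longrightarrow> (uv i :: 'k::comm_ring_1 vec) \<in> V N" by (simp add: uv_def V_def)

lemma Bev_of_even: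
  fixes B :: "nat \<Rightarrow> nat \<Rightarrow> 'k::comm_ring_1"
  assumes even: "even_form N par B"
  shows "\<forall>i<N. \<forall>j<N. par i \<noteq> par j \<longrightarrow> B i j = 0"
proof (intro allI impI)
  fix i j assume ij: "i < N" "j < N" "par i \<noteq> par j"
  have "homog N par (par i) (uv i :: 'k vec)" "homog N par (par j) (uv j :: 'k vec)"
    using ij uv_V[of i N, where 'k='k] uv_V[of j N, where 'k='k] unfolding homog_def by (auto simp: uv_def)
  then have "bform N B (uv i) (uv j) = 0" using even ij unfolding even_form_def by blast
  then show "B i j = 0" using bform_uv ij by metis
qed

definition hom :: "nat \<Rightarrow> (nat \<Rightarrow> bool) \<Rightarrow> 'k::comm_ring_1 vec \<Rightarrow> bool" where
  "hom N par v \<longleftrightarrow> (\<exists>p. homog N par p v)"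

lemma hom_ev: "v \<in> V N \<Longrightarrow> hom N par (evpart par v)" using homog_ev by (auto simp: hom_def)
lemma hom_od: "v \<in> V N \<Longrightarrow> hom N par (odpart par v)" using homog_od by (auto simp: hom_def)
lemma hom_V: "hom N par v \<Longrightarrow> v \<in> V N" by (auto simp: hom_def homog_def)

lemma ev_od_vadd: "vadd (evpart par v) (odpart par v) = (v::'k::comm_ring_1 vec)"
  by (simp add: vadd_eq ev_od)
lemma hom_split:
  fixes Q :: "'k::comm_ring_1 vec list \<Rightarrow> bool"
  assumes base: "\<And>as. length as = n \<Longrightarrow> (\<forall>x\<in>set as. hom N par x) \<Longrightarrow> Q as"
    and split: "\<And>as k. length as = n \<Longrightarrow> set as \<subseteq> V N \<Longrightarrow> k < n \<Longrightarrow>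
        Q (as[k := evpart par (as ! k)]) \<Longrightarrow> Q (as[k := odpart par (as ! k)]) \<Longrightarrow> Q as"
  shows "length as = n \<Longrightarrow> set as \<subseteq> V N \<Longrightarrow> Q as"
proof -
  have claim: "\<forall>as::'k vec list. length as = n \<and> set as \<subseteq> V N \<and> (\<forall>i. j \<le> i \<and> i < n \<longrightarrow> hom N par (as ! i)) \<longrightarrow> Q as" for j
  proof (induct j)
    case 0
    show ?case
    proof (intro allI impI)
      fix as :: "'k vec list" assume h: "length as = n \<and> set as \<subseteq> V N \<and> (\<forall>i. 0 \<le> i \<and> i < n \<longrightarrow> hom N par (as ! i))"
      then have "\<forall>x\<in>set as. hom N par x" by (metis in_set_conv_nth zero_le)
      then show "Q as" using base h by simp
    qed
  next
    case (Suc j)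
    show ?case
    proof (intro allI impI)
      fix as :: "'k vec list" assume h: "length as = n \<and> set as \<subseteq> V N \<and> (\<forall>i. Suc j \<le> i \<and> i < n \<longrightarrow> hom N par (as ! i))"
      show "Q as"
      proof (cases "j < n")
        case False
        then have "\<forall>i. j \<le> i \<and> i < n \<longrightarrow> hom N par (as ! i)" using h by auto
        then show ?thesis using Suc[rule_format, of as] h by simp
      next
        case True
        have aj: "as ! j \<in> V N" using h True nth_mem[of j as] by auto
        have e: "Q (as[j := evpart par (as ! j)])"
        proof (rule Suc[rule_format])
          show "length (as[j := evpart par (as ! j)]) = n \<and> set (as[j := evpart par (as ! j)]) \<subseteq> V N \<and>
            (\<forall>i. j \<le> i \<and> i < n \<longrightarrow> hom N par (as[j := evpart par (as ! j)] ! i))"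
          proof (intro conjI allI impI)
            show "set (as[j := evpart par (as ! j)]) \<subseteq> V N"
              by (rule set_update_subsetI) (use h V_ev[OF aj] in auto)
            fix i assume i: "j \<le> i \<and> i < n"
            show "hom N par (as[j := evpart par (as ! j)] ! i)"
            proof (cases "i = j")
              case True then show ?thesis using h hom_ev[OF aj] \<open>j < n\<close> by simp
            next
              case False then show ?thesis using h i by (simp add: nth_list_update)
            qed
          qed (use h in simp)
        qed
        have o: "Q (as[j := odpart par (as ! j)])"
        proof (rule Suc[rule_format])
          show "length (as[j := odpart par (as ! j)]) = n \<and> set (as[j := odpart par (as ! j)]) \<subseteq> V N \<and>
            (\<forall>i. j \<le> i \<and> i < n \<longrightarrow> hom N par (as[j := odpart par (as ! j)] ! i))"
          proof (intro conjI allI impI)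
            show "set (as[j := odpart par (as ! j)]) \<subseteq> V N"
              by (rule set_update_subsetI) (use h V_od[OF aj] in auto)
            fix i assume i: "j \<le> i \<and> i < n"
            show "hom N par (as[j := odpart par (as ! j)] ! i)"
            proof (cases "i = j")
              case True then show ?thesis using h hom_od[OF aj] \<open>j < n\<close> by simp
            next
              case False then show ?thesis using h i by (simp add: nth_list_update)
            qed
          qed (use h in simp)
        qed
        show ?thesis using split[OF _ _ True e o] h by simp
      qed
    qed
  qed
  assume "length as = n" "set as \<subseteq> V N"
  moreover have "\<forall>i. n \<le> i \<and> i < n \<longrightarrow> hom N par (as ! i)" by auto
  ultimately show ?thesis using claim[of n] by blast
qed


lemma vsmul_vsmul: "vsmul a (vsmul b v) = vsmul (a * b) (v :: 'k::comm_ring_1 vec)"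
  by (simp add: vsmul_def fun_eq_iff mult.assoc)
lemma vsmul_one: "vsmul 1 v = (v :: 'k::comm_ring_1 vec)"
  by (simp add: vsmul_def)

context
  fixes N n :: nat and par :: "nat \<Rightarrow> bool" and B :: "nat \<Rightarrow> nat \<Rightarrow> 'k::field"
    and op :: "'k vec list \<Rightarrow> 'k vec"
  assumes even: "even_form N par B" and skew: "superskew N par B"
    and ml: "multilinear N n op" and cm: "commutative N par n op" and inv: "invariant N par B n op"
begin

lemma swap1:
  assumes l: "length (ys @ y # z # zs) = n" and s: "set (ys @ y # z # zs) \<subseteq> V N"
    and hy: "hom N par y" and hz: "hom N par z"
  shows "\<exists>c. op (ys @ y # z # zs) = vsmul c (op (ys @ z # y # zs))"
proof -
  obtain p q where p: "homog N par p y" and q: "homog N par q z" using hy hz by (auto simp: hom_def)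
  let ?as = "ys @ y # z # zs" and ?k = "length ys"
  have "?as ! ?k = y" "?as ! Suc ?k = z" by (simp_all add: nth_append)
  moreover have "?as[?k := ?as ! Suc ?k, Suc ?k := ?as ! ?k] = ys @ z # y # zs"
    by (simp add: nth_append list_update_append)
  moreover have "Suc ?k < n" using l by simp
  ultimately have "op ?as = vsmul (sgn2 (p \<and> q)) (op (ys @ z # y # zs))"
    using cm[unfolded commutative_def, rule_format, of ?as ?k p q] l s p q by simp
  then show ?thesis by blast
qed

lemma move:
  "\<forall>z zs. length (ys @ z # zs) = n \<and> set (ys @ z # zs) \<subseteq> V N \<and> (\<forall>x\<in>set (ys @ z # zs). hom N par x) \<longrightarrow>
    (\<exists>c. op (ys @ z # zs) = vsmul c (op (z # ys @ zs))) \<and> (\<exists>c. op (z # ys @ zs) = vsmul c (op (ys @ z # zs)))"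
proof (induct ys rule: rev_induct)
  case Nil show ?case
  proof (intro allI impI conjI)
    fix z zs
    show "\<exists>c. op ([] @ z # zs) = vsmul c (op (z # [] @ zs))" by (rule exI[of _ 1]) (simp add: vsmul_one)
    show "\<exists>c. op (z # [] @ zs) = vsmul c (op ([] @ z # zs))" by (rule exI[of _ 1]) (simp add: vsmul_one)
  qed
next
  case (snoc y ys)
  show ?case
  proof (intro allI impI)
    fix z zs assume h: "length ((ys @ [y]) @ z # zs) = n \<and> set ((ys @ [y]) @ z # zs) \<subseteq> V N \<and>
      (\<forall>x\<in>set ((ys @ [y]) @ z # zs). hom N par x)"
    have h': "length (ys @ z # y # zs) = n \<and> set (ys @ z # y # zs) \<subseteq> V N \<and> (\<forall>x\<in>set (ys @ z # y # zs). hom N par x)"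
      using h by auto
    have IH: "(\<exists>c. op (ys @ z # y # zs) = vsmul c (op (z # ys @ y # zs))) \<and>
        (\<exists>c. op (z # ys @ y # zs) = vsmul c (op (ys @ z # y # zs)))"
      using snoc h' by blast
    obtain c2 where c2: "op (ys @ z # y # zs) = vsmul c2 (op (z # ys @ y # zs))" using IH by blast
    obtain c3 where c3: "op (z # ys @ y # zs) = vsmul c3 (op (ys @ z # y # zs))" using IH by blast
    have hy: "hom N par y" and hz: "hom N par z" using h by auto
    have l1: "length (ys @ y # z # zs) = n" and s1: "set (ys @ y # z # zs) \<subseteq> V N" using h by auto
    have l2: "length (ys @ z # y # zs) = n" and s2: "set (ys @ z # y # zs) \<subseteq> V N" using h by auto
    obtain c1 where c1: "op (ys @ y # z # zs) = vsmul c1 (op (ys @ z # y # zs))"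
      using swap1[OF l1 s1 hy hz] by blast
    obtain c4 where c4: "op (ys @ z # y # zs) = vsmul c4 (op (ys @ y # z # zs))"
      using swap1[OF l2 s2 hz hy] by blast
    have e1: "op ((ys @ [y]) @ z # zs) = vsmul (c1 * c2) (op (z # (ys @ [y]) @ zs))"
      using c1 c2 by (simp add: vsmul_vsmul)
    have e2: "op (z # (ys @ [y]) @ zs) = vsmul (c3 * c4) (op ((ys @ [y]) @ z # zs))"
      using c3 c4 by (simp add: vsmul_vsmul)
    show "(\<exists>c. op ((ys @ [y]) @ z # zs) = vsmul c (op (z # (ys @ [y]) @ zs))) \<and>
          (\<exists>c. op (z # (ys @ [y]) @ zs) = vsmul c (op ((ys @ [y]) @ z # zs)))"
      using e1 e2 by blast
  qed
qed

lemma ideal_perp: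
  assumes I: "ideal N par n op I" and n1: "1 \<le> n"
  shows "ideal N par n op (perp N B I)"
proof -
  have gI: "graded N par I" using I by (simp add: ideal_def)
  have gP: "graded N par (perp N B I)" using perp_graded[OF even skew gI] .
  let ?Q = "\<lambda>as. last as \<in> perp N B I \<longrightarrow> (\<forall>x\<in>I. bform N B x (op as) = 0)"
  have opV: "op as \<in> V N" if "length as = n" "set as \<subseteq> V N" for as
    using ml that by (simp add: multilinear_def)
  have allQ: "?Q as" if "length as = n" "set as \<subseteq> V N" for as
  proof (rule hom_split[where Q="?Q", OF _ _ that])
    fix as :: "'k vec list" assume l: "length as = n" and hh: "\<forall>x\<in>set as. hom N par x"
    show "?Q as"
    proof (intro impI ballI)
      fix x assume p: "last as \<in> perp N B I" and x: "x \<in> I"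
      have sV: "set as \<subseteq> V N" using hh hom_V by blast
      obtain rest p0 where as: "as = rest @ [p0]" using l n1
        by (metis append_butlast_last_id le_numeral_extra(2) length_0_conv)
      have p0: "p0 \<in> perp N B I" using p as by simp
      have lr: "length rest = n - 1" using l as by simp
      have hom_zero: "bform N B y (op as) = 0" if y: "homog N par py y" "y \<in> I" for y py
      proof -
        have yV: "y \<in> V N" using y by (simp add: homog_def)
        have hp0: "hom N par p0" using hh as by simp
        then obtain pp where pp: "homog N par pp p0" by (auto simp: hom_def)
        have pre1: "length (rest @ p0 # []) = n \<and> set (rest @ p0 # []) \<subseteq> V N \<and> (\<forall>x\<in>set (rest @ p0 # []). hom N par x)"
          using l sV hh as by simp
        have "\<exists>c. op (rest @ p0 # []) = vsmul c (op (p0 # rest @ []))"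
          using move[of rest, rule_format, OF pre1] by blast
        then obtain c1 where c1: "op (rest @ [p0]) = vsmul c1 (op (p0 # rest))" by auto
        have hall: "\<forall>x\<in>set (rest @ [y]). hom N par x" using hh as y by (auto simp: hom_def)
        have pre2: "length (rest @ y # []) = n \<and> set (rest @ y # []) \<subseteq> V N \<and> (\<forall>x\<in>set (rest @ y # []). hom N par x)"
          using l sV hall yV as by simp
        have "\<exists>c. op (y # rest @ []) = vsmul c (op (rest @ y # []))"
          using move[of rest, rule_format, OF pre2] by blast
        then obtain c2 where c2: "op (y # rest) = vsmul c2 (op (rest @ [y]))" by auto
        have pre3: "length (rest @ [y]) = n \<and> set (rest @ [y]) \<subseteq> V N \<and> last (rest @ [y]) \<in> I"
          using l sV yV as y(2) by simp
        have inI: "op (rest @ [y]) \<in> I"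
          using I[unfolded ideal_def, THEN conjunct2, rule_format, OF pre3] .
        have "bform N B p0 (op (rest @ [y])) = 0" using p0 inI by (simp add: perp_def)
        then have "bform N B p0 (op (y # rest)) = 0" using c2 by (simp add: bform_smul2)
        moreover have "bform N B y (op (p0 # rest)) = sgn2 (py \<and> pp) * bform N B p0 (op (y # rest))"
          by (rule inv[unfolded invariant_def, rule_format]) (use y(1) pp lr sV as in simp)
        ultimately have "bform N B y (op (p0 # rest)) = 0" by simp
        then show ?thesis using c1 as by (simp add: bform_smul2)
      qed
      have xV: "x \<in> V N" using x graded_V[OF even skew gI] by blast
      have "bform N B (evpart par x) (op as) = 0"
        using hom_zero[OF homog_ev[OF xV] graded_ev[OF even skew gI x]] .
      moreover have "bform N B (odpart par x) (op as) = 0"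
        using hom_zero[OF homog_od[OF xV] graded_od[OF even skew gI x]] .
      ultimately show "bform N B x (op as) = 0"
        using bform_add1[of N B "evpart par x" "odpart par x" "op as"] by (simp add: ev_od)
    qed
  next
    fix as :: "'k vec list" and k
    assume l: "length as = n" and s: "set as \<subseteq> V N" and k: "k < n"
      and Qe: "?Q (as[k := evpart par (as ! k)])" and Qo: "?Q (as[k := odpart par (as ! k)])"
    have akV: "as ! k \<in> V N" using s k l nth_mem by blast
    have split: "op as = vadd (op (as[k := evpart par (as ! k)])) (op (as[k := odpart par (as ! k)]))"
    proof -
      have "op (as[k := vadd (evpart par (as ! k)) (odpart par (as ! k))]) =
          vadd (op (as[k := evpart par (as ! k)])) (op (as[k := odpart par (as ! k)]))"
        using ml[unfolded multilinear_def, THEN conjunct2, rule_format, of as k "evpart par (as ! k)" "odpart par (as ! k)" 1]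
          l s k V_ev[OF akV] V_od[OF akV] by blast
      then show ?thesis by (simp only: ev_od_vadd list_update_id)
    qed
    show "?Q as"
    proof (intro impI ballI)
      fix x assume p: "last as \<in> perp N B I" and x: "x \<in> I"
      have ne: "as \<noteq> []" using l n1 by auto
      then have lastn: "last as = as ! (n - 1)" using l by (simp add: last_conv_nth)
      have le: "last (as[k := evpart par (as ! k)]) \<in> perp N B I"
      proof (cases "k = n - 1")
        case True
        then have "last (as[k := evpart par (as ! k)]) = evpart par (last as)"
          using l n1 lastn ne by (simp add: last_conv_nth)
        then show ?thesis using graded_ev[OF even skew gP p] by simp
      next
        case False
        then have "last (as[k := evpart par (as ! k)]) = last as" using l n1 lastn k ne
          by (simp add: last_conv_nth nth_list_update)
        then show ?thesis using p by simp
      qed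
      have lo: "last (as[k := odpart par (as ! k)]) \<in> perp N B I"
      proof (cases "k = n - 1")
        case True
        then have "last (as[k := odpart par (as ! k)]) = odpart par (last as)"
          using l n1 lastn ne by (simp add: last_conv_nth)
        then show ?thesis using graded_od[OF even skew gP p] by simp
      next
        case False
        then have "last (as[k := odpart par (as ! k)]) = last as" using l n1 lastn k ne
          by (simp add: last_conv_nth nth_list_update)
        then show ?thesis using p by simp
      qed
      show "bform N B x (op as) = 0"
        using Qe le Qo lo x split by (simp add: vadd_eq bform_add2)
    qed
  qed
  have "op as \<in> perp N B I" if "length as = n" "set as \<subseteq> V N" "last as \<in> perp N B I" for as
  proof -
    have "\<forall>x\<in>I. bform N B x (op as) = 0" using allQ that by blast
    then have "\<forall>x\<in>I. bform N B (op as) x = 0" using sym1[OF even skew gI opV[OF that(1,2)]] by blast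
    then show ?thesis using opV[OF that(1,2)] by (simp add: perp_def)
  qed
  then show ?thesis using gP by (simp add: ideal_def)
qed

end

lemma splus_mem: "u \<in> U \<Longrightarrow> w \<in> W \<Longrightarrow> u + w \<in> splus U W"
  by (auto simp: splus_def vadd_eq)
lemma splus_E: "x \<in> splus U W \<Longrightarrow> \<exists>u w. x = u + w \<and> u \<in> U \<and> w \<in> W"
  by (auto simp: splus_def vadd_eq)

lemma subsp_splus:
  assumes U: "subsp N (U :: 'k::comm_ring_1 vec set)" and W: "subsp N W"
  shows "subsp N (splus U W)"
  unfolding subsp_def
proof (intro conjI ballI allI)
  show "splus U W \<subseteq> V N"
  proof
    fix x assume "x \<in> splus U W"
    then obtain u w where "x = u + w" "u \<in> U" "w \<in> W" using splus_E by blast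
    then show "x \<in> V N" using U W V_add[of u N w] by (auto simp: subsp_def)
  qed
  show "vzero \<in> splus U W" using splus_mem[OF subsp_zero[OF U] subsp_zero[OF W]] by (simp add: vzero_eq)
next
  fix x y assume "x \<in> splus U W" "y \<in> splus U W"
  then obtain u1 w1 u2 w2 where h: "x = u1 + w1" "u1 \<in> U" "w1 \<in> W" "y = u2 + w2" "u2 \<in> U" "w2 \<in> W"
    using splus_E by metis
  have "(u1 + w1) + (u2 + w2) = (u1 + u2) + (w1 + w2)" by (simp add: algebra_simps)
  moreover have "(u1 + u2) + (w1 + w2) \<in> splus U W"
    using splus_mem[OF subsp_add[OF U h(2) h(5)] subsp_add[OF W h(3) h(6)]] .
  ultimately show "vadd x y \<in> splus U W" using h by (simp add: vadd_eq add_ac)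
next
  fix c x assume "x \<in> splus U W"
  then obtain u w where "x = u + w" "u \<in> U" "w \<in> W" using splus_E by blast
  moreover have "vsmul c (u + w) = vsmul c u + vsmul c w" by (simp add: vsmul_def fun_eq_iff algebra_simps)
  ultimately show "vsmul c x \<in> splus U W"
    using splus_mem[OF subsp_smul[OF U] subsp_smul[OF W]] by simp
qed

lemma graded_splus:
  assumes U: "graded N par (U :: 'k::comm_ring_1 vec set)" and W: "graded N par W"
  shows "graded N par (splus U W)"
proof -
  have "evpart par x \<in> splus U W" if xs: "x \<in> splus U W" for x
  proof -
    obtain u w where h: "x = u + w" "u \<in> U" "w \<in> W" using splus_E[OF xs] by blast
    have e: "evpart par (u + w) = evpart par u + evpart par w" by (simp add: evpart_def fun_eq_iff)
    have "evpart par u \<in> U" "evpart par w \<in> W" using U W h by (auto simp: graded_def)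
    then show ?thesis using splus_mem h e by metis
  qed
  moreover have "subsp N (splus U W)" using U W by (intro subsp_splus) (auto simp: graded_def)
  ultimately show ?thesis by (simp add: graded_def)
qed

lemma coset_shift:
  assumes P: "subsp N (P :: 'k::comm_ring_1 vec set)" and p: "p \<in> P"
  shows "coset P (v + p) = coset P v"
proof
  show "coset P (v + p) \<subseteq> coset P v"
  proof
    fix x assume "x \<in> coset P (v + p)"
    then obtain u where "x = vadd (v + p) u" "u \<in> P" by (auto simp: coset_def)
    then have "x = vadd v (p + u)" "p + u \<in> P" using subsp_add[OF P p] by (auto simp: vadd_eq add.assoc)
    then show "x \<in> coset P v" by (auto simp: coset_def)
  qed
  show "coset P v \<subseteq> coset P (v + p)"
  proof
    fix x assume "x \<in> coset P v"
    then obtain u where "x = vadd v u" "u \<in> P" by (auto simp: coset_def)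
    then have "x = vadd (v + p) (u + - p)" "u + - p \<in> P" using subsp_add[OF P _ subsp_neg[OF P p]]
      by (auto simp: vadd_eq algebra_simps)
    then show "x \<in> coset P (v + p)" by (auto simp: coset_def)
  qed
qed

lemma ideal_splus:
  assumes I: "ideal N par n op (I :: 'k::comm_ring_1 vec set)" and P: "ideal N par n op P"
    and n1: "1 \<le> n" and ml: "multilinear N n op"
  shows "ideal N par n op (splus I P)"
proof -
  have gI: "graded N par I" and gP: "graded N par P" using I P by (auto simp: ideal_def)
  have sI: "subsp N I" and sP: "subsp N P" using gI gP by (auto simp: graded_def)
  have "op as \<in> splus I P" if l: "length as = n" and s: "set as \<subseteq> V N" and la: "last as \<in> splus I P" for as
  proof -
    obtain i p where ip: "last as = i + p" "i \<in> I" "p \<in> P" using splus_E[OF la] by blast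
    have iV: "i \<in> V N" and pV: "p \<in> V N" using ip sI sP by (auto simp: subsp_def)
    have ne: "as \<noteq> []" using l n1 by auto
    let ?k = "n - 1"
    have lastn: "last as = as ! ?k" using ne l by (simp add: last_conv_nth)
    have k: "?k < n" using n1 by simp
    have "op (as[?k := vadd i p]) = vadd (op (as[?k := i])) (op (as[?k := p]))"
      using ml[unfolded multilinear_def, THEN conjunct2, rule_format, of as ?k i p 1] l s k iV pV by blast
    moreover have "as[?k := vadd i p] = as" using lastn ip by (simp add: vadd_eq)
    ultimately have e: "op as = op (as[?k := i]) + op (as[?k := p])" by (simp add: vadd_eq)
    have lsi: "last (as[?k := i]) = i" "last (as[?k := p]) = p" using ne l n1 by (simp_all add: last_conv_nth)
    have s1: "set (as[?k := i]) \<subseteq> V N" by (rule set_update_subsetI) (use s iV in auto)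
    have s2: "set (as[?k := p]) \<subseteq> V N" by (rule set_update_subsetI) (use s pV in auto)
    have "op (as[?k := i]) \<in> I"
      by (rule I[unfolded ideal_def, THEN conjunct2, rule_format]) (use l s1 ip lsi in simp)
    moreover have "op (as[?k := p]) \<in> P"
      by (rule P[unfolded ideal_def, THEN conjunct2, rule_format]) (use l s2 ip lsi in simp)
    ultimately show ?thesis using e splus_mem by simp
  qed
  then show ?thesis using graded_splus[OF gI gP] by (simp add: ideal_def)
qed

theorem mainTheorem2:
  fixes N n :: nat and par :: "nat \<Rightarrow> bool" and B :: "nat \<Rightarrow> nat \<Rightarrow> 'k::field_char_0"
    and op :: "'k vec list \<Rightarrow> 'k vec" and lam mu :: "'k spoly"
    and I H Ip W G :: "'k vec set"
  assumes n_pos: "1 \<le> n"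
    and form_even: "even_form N par B"
    and form_skew: "superskew N par B"
    and form_nondeg: "nondeg_on N B (V N)"
    and op_multilinear: "multilinear N n op"
    and op_comm: "commutative N par n op"
    and op_inv: "invariant N par B n op"
    and irred: "irreducible N par B n op"
    and not_simple: "\<not> simple N par n op"
    and lam_deg: "Sdeg N par (Suc n) lam"
    and lam_potential: "\<forall>as. length as = n \<and> set as \<subseteq> V N \<longrightarrow> op as = potop N par B lam as"
    and I_max: "maximal_nontrivial_ideal N par n op I"
    and Ip_def: "Ip = perp N B I"
    and H_graded: "graded N par H"
    and H_iso: "isotropic N B H"
    and H_Ip: "H \<inter> Ip = {vzero}"
    and H_Ip_nondeg: "nondeg_on N B (splus H Ip)"
    and W_def: "W = splus Ip H"
    and G_def: "G = perp N B W"
    and mu_in: "mu \<in> Ssub N par (Suc n) G"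
    and mu_component: "\<exists>rho \<in> Srest N par (Suc n) H Ip G. lam = (\<lambda>m. mu m + rho m)"
  shows "Ip \<subseteq> I \<and> G \<subseteq> I \<and> bij_betw (coset Ip) G (quot I Ip) \<and>
    (\<forall>as. length as = n \<and> set as \<subseteq> G \<longrightarrow>
       coset Ip (op as) = coset Ip (potop N par B mu as))"
proof -
  have Bev: "\<forall>i<N. \<forall>j<N. par i \<noteq> par j \<longrightarrow> B i j = 0" using Bev_of_even[OF form_even] .
  have Inon: "nontrivial_ideal N par n op I" using I_max by (simp add: maximal_nontrivial_ideal_def)
  have Iid: "ideal N par n op I" using Inon by (simp add: nontrivial_ideal_def)
  have gI: "graded N par I" using Iid by (simp add: ideal_def)
  have sI: "subsp N I" using gI by (simp add: graded_def)
  have IV: "I \<subseteq> V N" using sI by (simp add: subsp_def)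
  have gIp: "graded N par Ip" unfolding Ip_def by (rule perp_graded[OF form_even form_skew gI])
  have sIp: "subsp N Ip" using gIp by (simp add: graded_def)
  have IpV: "Ip \<subseteq> V N" using sIp by (simp add: subsp_def)
  have Ipid: "ideal N par n op Ip" unfolding Ip_def
    by (rule ideal_perp[OF form_even form_skew op_multilinear op_comm op_inv Iid n_pos])
  have sH: "subsp N H" using H_graded by (simp add: graded_def)
  have HV: "H \<subseteq> V N" using sH by (simp add: subsp_def)
  have oIP: "bform N B p x = 0" if "x \<in> I" "p \<in> Ip" for x p
    using that by (simp add: Ip_def perp_def)
  have oIP2: "bform N B x p = 0" if x: "x \<in> I" and p: "p \<in> Ip" for x p
  proof -
    have xV: "x \<in> V N" using x IV by auto
    show ?thesis by (rule sym1[OF form_even form_skew gIp xV _ p]) (use oIP x in auto)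
  qed
  have nd0: "y = 0" if "y \<in> V N" "\<forall>v\<in>V N. bform N B y v = 0" for y
    using form_nondeg that unfolding nondeg_on_def vzero_eq by blast
  have IpI: "Ip \<subseteq> I"
  proof -
    let ?J = "splus I Ip"
    have Jid: "ideal N par n op ?J" by (rule ideal_splus[OF Iid Ipid n_pos op_multilinear])
    have IJ: "I \<subseteq> ?J"
    proof
      fix x assume "x \<in> I" then show "x \<in> ?J" using splus_mem[OF _ subsp_zero[OF sIp]] by fastforce
    qed
    have IpJ: "Ip \<subseteq> ?J"
    proof
      fix x assume "x \<in> Ip" then show "x \<in> ?J" using splus_mem[OF subsp_zero[OF sI]] by fastforce
    qed
    show ?thesis
    proof (cases "?J = V N")
      case True
      have orthV: "bform N B y v = 0" if y: "\<forall>i\<in>I. bform N B y i = 0" "\<forall>p\<in>Ip. bform N B y p = 0" and v: "v \<in> V N" for y v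
      proof -
        obtain i p where "v = i + p" "i \<in> I" "p \<in> Ip" using splus_E[of v I Ip] v True by blast
        then show ?thesis using y by (simp add: bform_add2)
      qed
      have Ip0: "Ip \<noteq> {vzero}"
      proof
        assume "Ip = {vzero}"
        then have "?J \<subseteq> I" by (auto simp: splus_def vadd_def vzero_def)
        then show False using True Inon IJ by (simp add: nontrivial_ideal_def)
      qed
      have inter: "I \<inter> Ip = {vzero}"
      proof
        show "I \<inter> Ip \<subseteq> {vzero}"
        proof
          fix x assume x: "x \<in> I \<inter> Ip"
          have "\<forall>v\<in>V N. bform N B x v = 0"
            using orthV[of x] oIP[of _ x] oIP2[of x] x by auto
          then show "x \<in> {vzero}" using nd0[of x] x IV by (auto simp: vzero_eq)
        qed
        show "{vzero} \<subseteq> I \<inter> Ip" using subsp_zero[OF sI] subsp_zero[OF sIp] by (simp add: vzero_eq)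
      qed
      have ndI: "nondeg_on N B I"
        unfolding nondeg_on_def
      proof (intro ballI impI)
        fix u assume u: "u \<in> I" and h: "\<forall>w\<in>I. bform N B u w = 0"
        have "\<forall>v\<in>V N. bform N B u v = 0" using orthV[of u] h oIP2[OF u] by auto
        then show "u = vzero" using nd0[of u] u IV by (auto simp: vzero_eq)
      qed
      have ndIp: "nondeg_on N B Ip"
        unfolding nondeg_on_def
      proof (intro ballI impI)
        fix u assume u: "u \<in> Ip" and h: "\<forall>w\<in>Ip. bform N B u w = 0"
        have "\<forall>v\<in>V N. bform N B u v = 0" using orthV[of u] h oIP[of _ u] u by auto
        then show "u = vzero" using nd0[of u] u IpV by (auto simp: vzero_eq)
      qed
      have "\<exists>I' J'. ideal N par n op I' \<and> ideal N par n op J' \<and> I' \<noteq> {vzero} \<and> J' \<noteq> {vzero} \<and>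
           I' \<inter> J' = {vzero} \<and> splus I' J' = V N \<and> nondeg_on N B I' \<and> nondeg_on N B J'"
        using Iid Ipid Inon Ip0 inter True ndI ndIp by (auto simp: nontrivial_ideal_def)
      then show ?thesis using irred by (simp add: irreducible_def)
    next
      case False
      have z: "vzero \<in> I" using sI by (simp add: subsp_def)
      have "I \<noteq> {vzero}" using Inon by (simp add: nontrivial_ideal_def)
      then obtain x where "x \<in> I" "x \<noteq> vzero" using z by blast
      then have "?J \<noteq> {vzero}" using IJ by blast
      then have "nontrivial_ideal N par n op ?J" using Jid False by (simp add: nontrivial_ideal_def)
      then have "\<not> I \<subset> ?J" using I_max by (auto simp: maximal_nontrivial_ideal_def)
      then have "I = ?J" using IJ by blast
      then show ?thesis using IpJ by simp
    qed
  qed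
  have gW: "graded N par W" unfolding W_def by (rule graded_splus[OF gIp H_graded])
  have gG: "graded N par G" unfolding G_def by (rule perp_graded[OF form_even form_skew gW])
  have sG: "subsp N G" using gG by (simp add: graded_def)
  have GV: "G \<subseteq> V N" using sG by (simp add: subsp_def)
  have IpW: "Ip \<subseteq> W" unfolding W_def using splus_mem[OF _ subsp_zero[OF sH]] by fastforce
  have HW: "H \<subseteq> W" unfolding W_def using splus_mem[OF subsp_zero[OF sIp]] by fastforce
  have oG: "bform N B g w = 0" if "g \<in> G" "w \<in> W" for g w using that by (simp add: G_def perp_def)
  have GI: "G \<subseteq> I"
  proof
    fix g assume g: "g \<in> G"
    have gV: "g \<in> V N" using g GV by auto
    show "g \<in> I"
    proof (rule ccontr)
      assume gn: "g \<notin> I"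
      obtain F where F: "finite F" "F \<subseteq> I" "fs.span F = I" using fspan[OF sI] by blast
      have sepV: "\<forall>y\<in>V N. (\<forall>k\<in>V N. bform N B k y = 0) \<longrightarrow> y = 0"
        using nondeg_right[OF form_even form_skew form_nondeg] by blast
      have sV: "subsp N (V N :: 'k vec set)" by (auto simp: subsp_def V_def vzero_def vadd_def vsmul_def)
      have "\<exists>k\<in>V N. (\<forall>u\<in>F. bform N B k u = 0) \<and> bform N B k g = 1"
        by (rule sep[OF sV subsp_fs[OF sV] sepV F(1)]) (use F IV gV gn in auto)
      then obtain k where k: "k \<in> V N" "\<forall>u\<in>F. bform N B k u = 0" "bform N B k g = 1" by blast
      have "\<forall>u\<in>I. bform N B k u = 0" using bform_span0[OF k(2)] F(3) by blast
      then have kIp: "k \<in> Ip" using k(1) by (simp add: Ip_def perp_def)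
      have "bform N B k g = 0"
        by (rule sym2[OF form_even form_skew gIp gV _ kIp]) (use oG[OF g] IpW in auto)
      then show False using k(3) by simp
    qed
  qed
  have sepH: "\<forall>y\<in>H. (\<forall>k\<in>Ip. bform N B k y = 0) \<longrightarrow> y = 0"
  proof (intro ballI impI)
    fix h assume h: "h \<in> H" and hk: "\<forall>k\<in>Ip. bform N B k h = 0"
    have hV: "h \<in> V N" using h HV by auto
    have hp: "\<forall>p\<in>Ip. bform N B h p = 0" using sym1[OF form_even form_skew gIp hV hk] by blast
    have "h \<in> splus H Ip" using splus_mem[OF h subsp_zero[OF sIp]] by simp
    moreover have "\<forall>w\<in>splus H Ip. bform N B h w = 0"
    proof
      fix w assume "w \<in> splus H Ip"
      then obtain h' p where "w = h' + p" "h' \<in> H" "p \<in> Ip" using splus_E by blast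
      then show "bform N B h w = 0" using H_iso h hp by (simp add: isotropic_def bform_add2)
    qed
    ultimately show "h = 0" using H_Ip_nondeg by (simp add: nondeg_on_def vzero_eq)
  qed
  have inj: "inj_on (coset Ip) G"
  proof
    fix g1 g2 assume g1: "g1 \<in> G" and g2: "g2 \<in> G" and e: "coset Ip g1 = coset Ip g2"
    have "g1 \<in> coset Ip g1" using subsp_zero[OF sIp] by (force simp: coset_def vadd_eq)
    then have "g1 \<in> coset Ip g2" using e by simp
    then obtain u where u: "g1 = g2 + u" "u \<in> Ip" by (auto simp: coset_def vadd_eq)
    have uG: "u \<in> G" using subsp_add[OF sG g1 subsp_neg[OF sG g2]] u by (simp add: algebra_simps)
    have "u \<in> splus H Ip" using splus_mem[OF subsp_zero[OF sH] u(2)] by simp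
    moreover have "\<forall>w\<in>splus H Ip. bform N B u w = 0"
    proof
      fix w assume "w \<in> splus H Ip"
      then obtain h' p where "w = h' + p" "h' \<in> H" "p \<in> Ip" using splus_E by blast
      moreover then have "bform N B u h' = 0" "bform N B u p = 0" using oG[OF uG] HW IpW by blast+
      ultimately show "bform N B u w = 0" by (simp add: bform_add2)
    qed
    ultimately have "u = 0" using H_Ip_nondeg by (simp add: nondeg_on_def vzero_eq)
    then show "g1 = g2" using u by simp
  qed
  have img: "coset Ip ` G = quot I Ip"
  proof
    show "coset Ip ` G \<subseteq> quot I Ip" using GI by (auto simp: quot_def)
    show "quot I Ip \<subseteq> coset Ip ` G"
    proof
      fix c assume "c \<in> quot I Ip"
      then obtain x where x: "x \<in> I" "c = coset Ip x" by (auto simp: quot_def)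
      obtain F where F: "finite F" "F \<subseteq> H" "fs.span F = H" using fspan[OF sH] by blast
      obtain p where p: "p \<in> Ip" "\<forall>u\<in>F. bform N B p u = bform N B x u"
        using rep[OF sIp subsp_fs[OF sH] sepH F(1) F(2)] by blast
      have pH: "\<forall>u\<in>H. bform N B p u = bform N B x u" using bform_span_eq[OF p(2)] F(3) by blast
      define g where "g = x - p"
      have xV: "x \<in> V N" using x IV by auto
      have pV: "p \<in> V N" using p IpV by auto
      have gV: "g \<in> V N" unfolding g_def using V_add[OF xV, of "- p"] pV by (simp add: V_def)
      have "\<forall>w\<in>W. bform N B g w = 0"
      proof
        fix w assume "w \<in> W"
        then obtain p' h where "w = p' + h" "p' \<in> Ip" "h \<in> H" using splus_E W_def by blast
        moreover have "p \<in> I" using p IpI by auto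
        ultimately show "bform N B g w = 0"
          using oIP2[OF x(1)] oIP2[of p] pH unfolding g_def by (simp add: bform_add2 bform_diff1)
      qed
      then have gG: "g \<in> G" using gV by (simp add: G_def perp_def)
      have "coset Ip x = coset Ip g" using coset_shift[OF sIp p(1), of g] by (simp add: g_def)
      then show "c \<in> coset Ip ` G" using x gG by auto
    qed
  qed
  have bij: "bij_betw (coset Ip) G (quot I Ip)" using inj img by (simp add: bij_betw_def)
  have clG: "\<forall>a\<in>G. evpart par a \<in> G \<and> odpart par a \<in> G"
    using graded_ev[OF form_even form_skew gG] graded_od[OF form_even form_skew gG] by blast
  let ?A = "H \<union> Ip \<union> G" and ?Z = "H \<union> Ip"
  have clA: "\<forall>a\<in>?A. evpart par a \<in> ?A \<and> odpart par a \<in> ?A"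
    using graded_ev[OF form_even form_skew gG] graded_od[OF form_even form_skew gG]
      graded_ev[OF form_even form_skew gIp] graded_od[OF form_even form_skew gIp]
      graded_ev[OF form_even form_skew H_graded] graded_od[OF form_even form_skew H_graded] by blast
  have clZ: "\<forall>a\<in>?Z. evpart par a \<in> ?Z \<and> odpart par a \<in> ?Z"
    using graded_ev[OF form_even form_skew gIp] graded_od[OF form_even form_skew gIp]
      graded_ev[OF form_even form_skew H_graded] graded_od[OF form_even form_skew H_graded] by blast
  have ZA: "?Z \<subseteq> ?A" by blast
  have twG: "\<forall>g\<in>G. tw par g \<in> G"
  proof
    fix g assume g: "g \<in> G"
    have "tw par g = evpart par g + - odpart par g" by (simp add: tw_def evpart_def odpart_def fun_eq_iff)
    then show "tw par g \<in> G" using subsp_add[OF sG _ subsp_neg[OF sG]] clG g by simp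
  qed
  have orth: "\<forall>g\<in>G. \<forall>z\<in>?Z. bform N B g z = 0" using oG HW IpW by blast
  have ZS: "?Z \<subseteq> splus H Ip"
  proof
    fix z assume "z \<in> ?Z"
    then show "z \<in> splus H Ip"
      using splus_mem[OF _ subsp_zero[OF sIp], of z H] splus_mem[OF subsp_zero[OF sH], of z Ip] by auto
  qed
  obtain rho where rho: "rho \<in> Srest N par (Suc n) H Ip G" "lam = (\<lambda>m. mu m + rho m)" using mu_component by blast
  have rhoR: "rho \<in> Rset N par (Suc n) ?A ?Z"
  proof -
    have "{vprod N par (hs @ ps @ gs) | hs ps gs. set hs \<subseteq> H \<and> set ps \<subseteq> Ip \<and> set gs \<subseteq> G \<and>
        length hs + length ps + length gs = Suc n \<and> (hs \<noteq> [] \<or> ps \<noteq> [])} \<subseteq>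
        {vprod N par vs | vs. length vs = Suc n \<and> set vs \<subseteq> ?A \<and> (\<exists>z\<in>?Z. z \<in> set vs)}"
    proof clarify
      fix hs ps gs :: "'k vec list"
      assume h: "set hs \<subseteq> H" "set ps \<subseteq> Ip" "set gs \<subseteq> G" "length hs + length ps + length gs = Suc n" "hs \<noteq> [] \<or> ps \<noteq> []"
      have "\<exists>z\<in>?Z. z \<in> set (hs @ ps @ gs)"
      proof (cases "hs = []")
        case True then obtain z where "z \<in> set ps" using h(5) by (metis list.set_intros(1) neq_Nil_conv)
        then show ?thesis using h(2) by auto
      next
        case False then obtain z where "z \<in> set hs" by (metis list.set_intros(1) neq_Nil_conv)
        then show ?thesis using h(1) by auto
      qed
      then show "\<exists>vs. vprod N par (hs @ ps @ gs) = vprod N par vs \<and> length vs = Suc n \<and> set vs \<subseteq> ?A \<and> (\<exists>z\<in>?Z. z \<in> set vs)"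
        using h by (intro exI[of _ "hs @ ps @ gs"]) auto
    qed
    then show ?thesis using rho(1) kspan_mono unfolding Srest_def Rset_def by blast
  qed
  have final: "coset Ip (op as) = coset Ip (potop N par B mu as)" if l: "length as = n" and sa: "set as \<subseteq> G" for as
  proof -
    have asV: "set as \<subseteq> V N" using sa GV by auto
    have opas: "op as = potop N par B mu as + deg1 N (brk N par B as rho)"
      using lam_potential l asV rho(2) by (simp add: potop_def brk_add deg1_add)
    have bm: "brk N par B as mu \<in> Ssub N par (Suc 0) G"
      by (rule brk_Q[OF Bev clG]) (use mu_in l in simp)
    have dm: "potop N par B mu as \<in> G" unfolding potop_def by (rule deg1_Ssub1[OF sG subset_refl bm])
    have br: "brk N par B as rho \<in> Rset N par (Suc 0) ?A ?Z"
      by (rule brk_R[OF Bev clA clZ ZA twG orth sa]) (use rhoR l in simp)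
    have dr: "deg1 N (brk N par B as rho) \<in> splus H Ip"
      by (rule deg1_R1[OF subsp_splus[OF sH sIp] ZS br])
    obtain h p where hp: "deg1 N (brk N par B as rho) = h + p" "h \<in> H" "p \<in> Ip" using splus_E[OF dr] by blast
    have ne: "as \<noteq> []" using l n_pos by auto
    have "last as \<in> G" using sa ne by auto
    then have opI: "op as \<in> I"
      using Iid[unfolded ideal_def, THEN conjunct2, rule_format, of as] l asV GI by auto
    have hexp: "h = op as + - potop N par B mu as + - p" using opas hp by (simp add: algebra_simps)
    have hI: "h \<in> I" unfolding hexp
      using subsp_add[OF sI subsp_add[OF sI opI subsp_neg[OF sI]] subsp_neg[OF sI]] dm GI hp(3) IpI by blast
    have "h \<in> splus H Ip" using splus_mem[OF hp(2) subsp_zero[OF sIp]] by simp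
    moreover have "\<forall>w\<in>splus H Ip. bform N B h w = 0"
    proof
      fix w assume "w \<in> splus H Ip"
      then obtain h' p' where w: "w = h' + p'" "h' \<in> H" "p' \<in> Ip" using splus_E by blast
      have "bform N B h h' = 0" using H_iso hp(2) w(2) by (simp add: isotropic_def)
      moreover have "bform N B h p' = 0" using oIP2[OF hI w(3)] .
      ultimately show "bform N B h w = 0" using w(1) by (simp add: bform_add2)
    qed
    ultimately have "h = 0" using H_Ip_nondeg by (simp add: nondeg_on_def vzero_eq)
    then have "op as = potop N par B mu as + p" using opas hp by simp
    then show ?thesis using coset_shift[OF sIp hp(3)] by simp
  qed
  show ?thesis using IpI GI bij final by blast
qed

end
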